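(* Let $0<s_1<s_2<1$, $2s_1<d<\frac{2s_1s_2}{s_2-s_1}$, $a>0$, and assume $g$ satisfies $(G_1)$–$(G_2)$. Then there exists $K(a)>0$ small enough such that $$0<\sup_{u\in A}I(u)<\inf_{u\in B}I(u),$$ where $A=\{u\in S_a:|\nabla_{s_1}u|_2^2+|\nabla_{s_2}u|_2^2\le K(a)\}$ and $B=\{u\in S_a:|\nabla_{s_1}u|_2^2+|\nabla_{s_2}u|_2^2=2K(a)\}$.
   Context: For $s\in(0,1)$, $|\nabla_s u|_2^2=\int_{\mathbb{R}^d\times\mathbb{R}^d}\frac{|u(x)-u(y)|^2}{|x-y|^{d+2s}}dx\,dy$; $|\cdot|_p$ is the $L^p(\mathbb{R}^d)$ norm; $H^{s_1,s_2}(\mathbb{R}^d)=\{u\in L^2(\mathbb{R}^d):|\nabla_{s_1}u|_2<\infty,\ |\nabla_{s_2}u|_2<\infty\}$. $S_a=\{u\in H^{s_1,s_2}(\mathbb{R}^d):|u|_2^2=a\}$. $g:\mathbb{R}\to\mathbb{R}$, $G(s)=\int_0^sg$. $(G_1)$: $g$ continuous, odd. $(G_2)$: there exist $\alpha,\beta$ with $2+\frac{4s_2}{d}<\alpha<\beta<\frac{2d}{d-2s_1}$ and $\alpha G(s)\le g(s)s\le\beta G(s)$ for all $s$. $I(u)=\frac12|\nabla_{s_1}u|_2^2+\frac12|\nabla_{s_2}u|_2^2-\int_{\mathbb{R}^d}G(u)dx$. *)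

theory Defs
  imports "HOL-Analysis.Analysis"
begin

text \<open>Squared Gagliardo seminorm |nabla_s u|_2^2 as an extended nonnegative integral
  over R^d x R^d (no normalising constant, as in the paper).\<close>
definition gagliardo_sq :: "real \<Rightarrow> (real^'n \<Rightarrow> real) \<Rightarrow> ennreal" where
  "gagliardo_sq s u =
     (\<integral>\<^sup>+ z. ennreal ((u (fst z) - u (snd z))\<^sup>2 /
           norm (fst z - snd z) powr (real CARD('n) + 2 * s)) \<partial>(lborel \<Otimes>\<^sub>M lborel))"

definition frac_grad_sq :: "real \<Rightarrow> (real^'n \<Rightarrow> real) \<Rightarrow> real" where
  "frac_grad_sq s u = enn2real (gagliardo_sq s u)"

definition L2_norm_sq :: "(real^'n \<Rightarrow> real) \<Rightarrow> real" where
  "L2_norm_sq u = (\<integral>x. (u x)\<^sup>2 \<partial>lborel)"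

definition H_space :: "real \<Rightarrow> real \<Rightarrow> (real^'n \<Rightarrow> real) set" where
  "H_space s1 s2 = {u. u \<in> borel_measurable lborel \<and> integrable lborel (\<lambda>x. (u x)\<^sup>2)
      \<and> gagliardo_sq s1 u < \<infinity> \<and> gagliardo_sq s2 u < \<infinity>}"

definition S_sphere :: "real \<Rightarrow> real \<Rightarrow> real \<Rightarrow> (real^'n \<Rightarrow> real) set" where
  "S_sphere s1 s2 a = {u \<in> H_space s1 s2. L2_norm_sq u = a}"

definition primitive :: "(real \<Rightarrow> real) \<Rightarrow> real \<Rightarrow> real" where
  "primitive g s = (LBINT t=0..s. g t)"

definition energy :: "real \<Rightarrow> real \<Rightarrow> (real \<Rightarrow> real) \<Rightarrow> (real^'n \<Rightarrow> real) \<Rightarrow> real" where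
  "energy s1 s2 g u = frac_grad_sq s1 u / 2 + frac_grad_sq s2 u / 2
      - (\<integral>x. primitive g (u x) \<partial>lborel)"

end

theory Submission
  imports Defs
begin


lemma gag_fst:
  fixes u :: "real^'n \<Rightarrow> real"
  assumes [measurable]: "u \<in> borel_measurable lborel"
  shows "gagliardo_sq s u = (\<integral>\<^sup>+ x. \<integral>\<^sup>+ y. ennreal ((u x - u y)\<^sup>2 /
           norm (x - y) powr (real CARD('n) + 2 * s)) \<partial>lborel \<partial>lborel)"
proof -
  have m: "(\<lambda>z. ennreal ((u (fst z) - u (snd z))\<^sup>2 /
           norm (fst z - snd z) powr (real CARD('n) + 2 * s))) \<in> borel_measurable (lborel \<Otimes>\<^sub>M lborel)"
    by measurable
  show ?thesis unfolding gagliardo_sq_def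
    using lborel.nn_integral_fst[OF m, symmetric] by simp
qed

lemma markov_p:
  fixes u :: "real^'n \<Rightarrow> real"
  assumes [measurable]: "u \<in> borel_measurable lborel" and lam: "lam > 0" and p: "p > 0"
    and N: "N \<ge> 0" and intp: "(\<integral>\<^sup>+ x. ennreal (\<bar>u x\<bar> powr p) \<partial>lborel) \<le> ennreal N"
  shows "emeasure lborel {x. lam < \<bar>u x\<bar>} \<le> ennreal (N / lam powr p)"
proof -
  have "emeasure lborel {x. lam < \<bar>u x\<bar>} = (\<integral>\<^sup>+ x. indicator {x. lam < \<bar>u x\<bar>} x \<partial>lborel)"
    by (simp add: nn_integral_indicator)
  also have "\<dots> \<le> (\<integral>\<^sup>+ x. ennreal (1 / lam powr p) * ennreal (\<bar>u x\<bar> powr p) \<partial>lborel)"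
  proof (rule nn_integral_mono)
    fix x
    show "indicator {x. lam < \<bar>u x\<bar>} x \<le> ennreal (1 / lam powr p) * ennreal (\<bar>u x\<bar> powr p)"
    proof (cases "lam < \<bar>u x\<bar>")
      case True
      then have "lam powr p \<le> \<bar>u x\<bar> powr p" using lam p by (intro powr_mono2) auto
      then have "1 \<le> 1 / lam powr p * \<bar>u x\<bar> powr p" using lam by (simp add: field_simps)
      then show ?thesis using True lam by (simp add: ennreal_mult'[symmetric])
    qed simp
  qed
  also have "\<dots> = ennreal (1 / lam powr p) * (\<integral>\<^sup>+ x. ennreal (\<bar>u x\<bar> powr p) \<partial>lborel)"
    by (rule nn_integral_cmult) measurable
  also have "\<dots> \<le> ennreal (1 / lam powr p) * ennreal N"
    by (intro mult_left_mono intp) auto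
  also have "\<dots> = ennreal (N / lam powr p)"
    using lam N by (simp add: ennreal_mult'[symmetric])
  finally show ?thesis .
qed

lemma powr_l2: "lam > 0 \<Longrightarrow> lam powr (p - 2) * lam\<^sup>2 = (lam::real) powr p"
proof -
  assume lam: "lam > 0"
  have "lam powr (p-2) * lam^2 = lam powr (p-2) * lam powr 2" using lam by simp
  also have "\<dots> = lam powr p" by (simp add: powr_add[symmetric])
  finally show ?thesis .
qed

lemma level_est:
  fixes u :: "real^'n \<Rightarrow> real"
  assumes [measurable]: "u \<in> borel_measurable lborel" and lam: "lam > 0" and p: "p > 0"
    and s: "s > 0" and N: "N > 0"
    and intp: "(\<integral>\<^sup>+ x. ennreal (\<bar>u x\<bar> powr p) \<partial>lborel) \<le> ennreal N"
  defines "r \<equiv> (2 * N / (unit_ball_vol (real CARD('n)) * lam powr p)) powr (1 / real CARD('n))"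
  shows "emeasure lborel {x. 2 * lam < \<bar>u x\<bar>}
     \<le> ennreal (r powr (real CARD('n) + 2 * s) * lam powr (p - 2) / N) * gagliardo_sq s u"
proof -
  define d where "d = real CARD('n)"
  define \<omega> where "\<omega> = unit_ball_vol d"
  have d: "d > 0" unfolding d_def by simp
  have om: "\<omega> > 0" unfolding \<omega>_def using d by simp
  have om': "unit_ball_vol (real CARD('n)) > 0" by simp
  have "2 * N / (unit_ball_vol (real CARD('n)) * lam powr p) > 0"
    using N lam om' by (intro divide_pos_pos mult_pos_pos) auto
  then have r: "r > 0" unfolding r_def by (rule powr_gt_zero[THEN iffD2, OF less_imp_neq[symmetric]])
  have rd: "\<omega> * r ^ CARD('n) = 2 * N / lam powr p"
  proof -
    have "r ^ CARD('n) = r powr d" using r by (simp add: d_def powr_realpow)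
    also have "\<dots> = 2 * N / (\<omega> * lam powr p)"
      unfolding r_def d_def \<omega>_def using N om lam d d_def \<omega>_def
      by (simp add: powr_powr)
    finally show ?thesis using om by simp
  qed
  define c where "c = r powr (d + 2 * s) * lam powr (p - 2) / N"
  have c: "c > 0" unfolding c_def using r lam N by simp
  define F where "F x = (\<integral>\<^sup>+ y. ennreal ((u x - u y)\<^sup>2 / norm (x - y) powr (d + 2 * s)) \<partial>lborel)" for x
  have mk: "emeasure lborel {x. lam < \<bar>u x\<bar>} \<le> ennreal (N / lam powr p)"
    by (rule markov_p) (use lam p N intp in auto)
  have key: "indicator {x. 2 * lam < \<bar>u x\<bar>} x \<le> ennreal c * F x" for x
  proof (cases "2 * lam < \<bar>u x\<bar>")
    case False then show ?thesis by simp
  next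
    case True
    define B where "B = cball x r \<inter> {y. \<bar>u y\<bar> \<le> lam}"
    have [measurable]: "B \<in> sets borel" unfolding B_def by measurable
    have "emeasure lborel (cball x r) \<le> emeasure lborel (B \<union> {y. lam < \<bar>u y\<bar>})"
      by (rule emeasure_mono) (auto simp: B_def)
    also have "\<dots> \<le> emeasure lborel B + emeasure lborel {y. lam < \<bar>u y\<bar>}"
      by (rule emeasure_subadditive) auto
    also have "\<dots> \<le> emeasure lborel B + ennreal (N / lam powr p)"
      using mk by (rule add_left_mono)
    finally have "ennreal (2 * N / lam powr p) \<le> emeasure lborel B + ennreal (N / lam powr p)"
      using emeasure_cball[of r x] r rd unfolding \<omega>_def d_def by simp
    moreover have "ennreal (2 * N / lam powr p) = ennreal (N / lam powr p) + ennreal (N / lam powr p)"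
      using N lam by (simp add: ennreal_plus[symmetric] del: ennreal_plus)
    ultimately have "ennreal (N / lam powr p) + ennreal (N / lam powr p)
        \<le> ennreal (N / lam powr p) + emeasure lborel B"
      by (simp add: add.commute)
    then have EB: "ennreal (N / lam powr p) \<le> emeasure lborel B"
      unfolding ennreal_add_left_cancel_le by simp
    have "ennreal (lam\<^sup>2 / r powr (d + 2 * s)) * ennreal (N / lam powr p)
        \<le> ennreal (lam\<^sup>2 / r powr (d + 2 * s)) * emeasure lborel B"
      by (rule mult_left_mono[OF EB]) simp
    also have "\<dots> = (\<integral>\<^sup>+ y. ennreal (lam\<^sup>2 / r powr (d + 2 * s)) * indicator B y \<partial>lborel)"
      by (simp add: nn_integral_cmult_indicator)
    also have "\<dots> \<le> F x" unfolding F_def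
    proof (rule nn_integral_mono)
      fix y
      show "ennreal (lam\<^sup>2 / r powr (d + 2 * s)) * indicator B y
          \<le> ennreal ((u x - u y)\<^sup>2 / norm (x - y) powr (d + 2 * s))"
      proof (cases "y \<in> B")
        case yB: True
        then have uy: "\<bar>u y\<bar> \<le> lam" and dy: "dist x y \<le> r" by (auto simp: B_def)
        have gt: "lam < \<bar>u x - u y\<bar>" using True uy by linarith
        then have "x \<noteq> y" using lam by auto
        then have n0: "norm (x - y) > 0" by simp
        have "norm (x - y) powr (d + 2 * s) \<le> r powr (d + 2 * s)"
          using dy n0 d s by (intro powr_mono2) (auto simp: dist_norm)
        moreover have "lam\<^sup>2 \<le> (u x - u y)\<^sup>2" using gt lam
          by (metis abs_of_pos less_imp_le power2_abs power_mono)
        ultimately have "lam\<^sup>2 / r powr (d + 2 * s) \<le> (u x - u y)\<^sup>2 / norm (x - y) powr (d + 2 * s)"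
          using n0 lam by (intro frac_le) auto
        then show ?thesis using yB by simp
      qed simp
    qed
    finally have Fx: "ennreal (lam\<^sup>2 / r powr (d + 2 * s) * (N / lam powr p)) \<le> F x"
      using lam N r by (simp add: ennreal_mult'[symmetric])
    have cX: "c * (lam\<^sup>2 / r powr (d + 2 * s) * (N / lam powr p)) = 1"
      unfolding c_def using lam r N
      by (simp add: field_simps, metis powr_l2 mult.commute)
    have "(1::ennreal) = ennreal (c * (lam\<^sup>2 / r powr (d + 2 * s) * (N / lam powr p)))"
      by (subst cX) simp
    also have "\<dots> = ennreal c * ennreal (lam\<^sup>2 / r powr (d + 2 * s) * (N / lam powr p))"
      using c by (intro ennreal_mult') simp
    also have "\<dots> \<le> ennreal c * F x" by (rule mult_left_mono[OF Fx]) simp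
    finally show ?thesis using True by simp
  qed
  have "emeasure lborel {x. 2 * lam < \<bar>u x\<bar>} = (\<integral>\<^sup>+ x. indicator {x. 2 * lam < \<bar>u x\<bar>} x \<partial>lborel)"
    by (simp add: nn_integral_indicator)
  also have "\<dots> \<le> (\<integral>\<^sup>+ x. ennreal c * F x \<partial>lborel)"
    by (rule nn_integral_mono) (rule key)
  also have "\<dots> = ennreal c * (\<integral>\<^sup>+ x. F x \<partial>lborel)"
    by (rule nn_integral_cmult) (unfold F_def, measurable)
  also have "(\<integral>\<^sup>+ x. F x \<partial>lborel) = gagliardo_sq s u"
    unfolding F_def d_def by (rule gag_fst[symmetric]) measurable
  finally show ?thesis unfolding c_def d_def .
qed

lemma exists_dyadic:
  fixes m :: real assumes "m > 1"
  shows "\<exists>k::nat. 2 ^ k < m \<and> m \<le> 2 ^ (k + 1)"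
proof -
  obtain n :: nat where n: "m < 2 ^ n" using real_arch_pow[of 2 m] by auto
  define P where "P = (\<lambda>j::nat. m \<le> 2 ^ j)"
  have "P n" using n unfolding P_def by simp
  define j where "j = (LEAST j. P j)"
  have Pj: "P j" unfolding j_def by (rule LeastI[of P n, OF \<open>P n\<close>])
  have j0: "j \<noteq> 0" using Pj assms unfolding P_def by (intro notI) simp
  then obtain k where k: "j = k + 1" by (metis Suc_eq_plus1 not0_implies_Suc)
  have "\<not> P k" using k unfolding j_def by (metis Least_le Suc_n_not_le_n Suc_eq_plus1)
  then show ?thesis using Pj k unfolding P_def by (intro exI[of _ k]) auto
qed

lemma dyadic_pw:
  fixes t T p :: real assumes T: "T > 0" and p: "p \<ge> 2"
  shows "ennreal (\<bar>t\<bar> powr p) \<le> ennreal ((2 * T) powr (p - 2) * t\<^sup>2)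
     + (\<Sum>k. ennreal ((2 ^ (k + 2) * T) powr p) * indicator {x. 2 * (2 ^ k * T) < x} \<bar>t\<bar>)"
proof (cases "\<bar>t\<bar> \<le> 2 * T")
  case True
  have "\<bar>t\<bar> powr p \<le> (2 * T) powr (p - 2) * t\<^sup>2"
  proof (cases "t = 0")
    case False
    have "\<bar>t\<bar> powr p = \<bar>t\<bar> powr (p - 2) * \<bar>t\<bar>\<^sup>2"
      using powr_l2[of "\<bar>t\<bar>" p] False by simp
    also have "\<dots> \<le> (2 * T) powr (p - 2) * \<bar>t\<bar>\<^sup>2"
      using True p by (intro mult_right_mono powr_mono2) auto
    finally show ?thesis by simp
  qed (use p in simp)
  then show ?thesis by (simp add: add_increasing2)
next
  case False
  then have "\<bar>t\<bar> / (2 * T) > 1" using T by simp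
  then obtain k :: nat where k: "2 ^ k < \<bar>t\<bar> / (2 * T)" "\<bar>t\<bar> / (2 * T) \<le> 2 ^ (k + 1)"
    using exists_dyadic by blast
  have k1: "2 * (2 ^ k * T) < \<bar>t\<bar>" using k(1) T by (simp add: field_simps)
  have k2: "\<bar>t\<bar> \<le> 2 ^ (k + 2) * T" using k(2) T by (simp add: field_simps)
  have "ennreal (\<bar>t\<bar> powr p) \<le> ennreal ((2 ^ (k + 2) * T) powr p)"
    using k2 p by (intro ennreal_leI powr_mono2) auto
  also have "\<dots> = (\<Sum>j\<in>{k}. ennreal ((2 ^ (j + 2) * T) powr p) * indicator {x. 2 * (2 ^ j * T) < x} \<bar>t\<bar>)"
    using k1 by simp
  also have "\<dots> \<le> (\<Sum>j. ennreal ((2 ^ (j + 2) * T) powr p) * indicator {x. 2 * (2 ^ j * T) < x} \<bar>t\<bar>)"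
    by (rule sum_le_suminf) (auto intro: summableI)
  finally show ?thesis by (simp add: add_increasing)
qed

lemma pow2_powr: "((2::real) ^ n) powr x = 2 powr (real n * x)"
  by (simp add: powr_realpow[symmetric] powr_powr)

lemma pow2_pow: "((2::real) powr x) ^ n = 2 powr (real n * x)"
  by (simp add: powr_realpow[symmetric] powr_powr mult.commute)

lemma dyadic_term:
  fixes T p q :: real
  assumes T: "T > 0"
  shows "(2 ^ (k + 2) * T) powr p * (2 ^ k * T) powr (- q) = 4 powr p * T powr (p - q) * (2 powr (p - q)) ^ k"
proof -
  have "(2 ^ (k + 2) * T) powr p * (2 ^ k * T) powr (- q)
      = 2 powr (real (k + 2) * p) * 2 powr (real k * (- q)) * (T powr p * T powr (- q))"
  proof -
    have e1: "(2 ^ (k + 2) * T) powr p = (2 ^ (k + 2)) powr p * T powr p" using T by (intro powr_mult; simp)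
    have e2: "(2 ^ k * T) powr (- q) = (2 ^ k) powr (- q) * T powr (- q)" using T by (intro powr_mult; simp)
    show ?thesis unfolding e1 e2 pow2_powr by (simp only: ac_simps)
  qed
  also have "\<dots> = 2 powr (2 * p) * (2 powr (real k * (p - q)) * T powr (p - q))"
    by (simp add: powr_add[symmetric] algebra_simps)
  also have "2 powr (2 * p) = (4::real) powr p"
    by (simp add: powr_powr[symmetric])
  also have "2 powr (real k * (p - q)) = (2 powr (p - q)) ^ k"
    by (simp add: pow2_pow)
  finally show ?thesis by (simp only: ac_simps)
qed

lemma dyadic_int:
  fixes u :: "real^'n \<Rightarrow> real"
  assumes [measurable]: "u \<in> borel_measurable lborel" and T: "T > 0" and p: "p \<ge> 2" and q: "q > p"
    and M: "M \<ge> 0" and A: "A \<ge> 0"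
    and L2: "(\<integral>\<^sup>+ x. ennreal ((u x)\<^sup>2) \<partial>lborel) \<le> ennreal A"
    and lev: "\<And>k::nat. emeasure lborel {x. 2 * (2 ^ k * T) < \<bar>u x\<bar>} \<le> ennreal (M * (2 ^ k * T) powr (- q))"
  shows "(\<integral>\<^sup>+ x. ennreal (\<bar>u x\<bar> powr p) \<partial>lborel)
     \<le> ennreal ((2 * T) powr (p - 2) * A + 4 powr p * M * T powr (p - q) / (1 - 2 powr (p - q)))"
proof -
  define c where "c k = ennreal ((2 ^ (k + 2) * T) powr p)" for k :: nat
  define S where "S k = {x. 2 * (2 ^ k * T) < \<bar>u x\<bar>}" for k :: nat
  have [measurable, simp]: "S k \<in> sets borel" for k unfolding S_def by measurable
  have "(\<integral>\<^sup>+ x. ennreal (\<bar>u x\<bar> powr p) \<partial>lborel)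
      \<le> (\<integral>\<^sup>+ x. ennreal ((2 * T) powr (p - 2)) * ennreal ((u x)\<^sup>2) + (\<Sum>k. c k * indicator (S k) x) \<partial>lborel)"
  proof (rule nn_integral_mono)
    fix x
    have "indicator (S k) x = (indicator {x. 2 * (2 ^ k * T) < x} \<bar>u x\<bar> :: ennreal)" for k
      unfolding S_def by (simp add: indicator_def)
    then show "ennreal (\<bar>u x\<bar> powr p) \<le> ennreal ((2 * T) powr (p - 2)) * ennreal ((u x)\<^sup>2) + (\<Sum>k. c k * indicator (S k) x)"
      using dyadic_pw[OF T p, of "u x"] T unfolding c_def by (simp add: ennreal_mult')
  qed
  also have "\<dots> = ennreal ((2 * T) powr (p - 2)) * (\<integral>\<^sup>+ x. ennreal ((u x)\<^sup>2) \<partial>lborel)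
      + (\<Sum>k. c k * emeasure lborel (S k))"
    by (subst nn_integral_add) (auto simp: nn_integral_cmult nn_integral_suminf nn_integral_cmult_indicator)
  also have "\<dots> \<le> ennreal ((2 * T) powr (p - 2)) * ennreal A
      + (\<Sum>k. ennreal (4 powr p * M * T powr (p - q) * (2 powr (p - q)) ^ k))"
  proof (intro add_mono mult_left_mono L2 suminf_le summableI)
    fix k
    have "c k * emeasure lborel (S k) \<le> c k * ennreal (M * (2 ^ k * T) powr (- q))"
      unfolding S_def by (intro mult_left_mono lev) auto
    also have "\<dots> = ennreal (4 powr p * M * T powr (p - q) * (2 powr (p - q)) ^ k)"
      unfolding c_def using M dyadic_term[OF T, of k p q]
      by (simp add: ennreal_mult'[symmetric] algebra_simps)
    finally show "c k * emeasure lborel (S k) \<le> ennreal (4 powr p * M * T powr (p - q) * (2 powr (p - q)) ^ k)" .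
  qed auto
  also have "(\<Sum>k. ennreal (4 powr p * M * T powr (p - q) * (2 powr (p - q)) ^ k))
      = ennreal (4 powr p * M * T powr (p - q) / (1 - 2 powr (p - q)))"
  proof (rule suminf_ennreal_eq)
    show "0 \<le> 4 powr p * M * T powr (p - q) * (2 powr (p - q)) ^ k" for k using M by simp
    have "2 powr (p - q) < 1" using q by (simp add: powr_less_one)
    then have "(\<lambda>k. (2 powr (p - q)) ^ k) sums (1 / (1 - 2 powr (p - q)))"
      by (intro geometric_sums) simp
    from sums_mult[OF this, of "4 powr p * M * T powr (p - q)"]
    show "(\<lambda>k. 4 powr p * M * T powr (p - q) * (2 powr (p - q)) ^ k) sums (4 powr p * M * T powr (p - q) / (1 - 2 powr (p - q)))"
      by simp
  qed
  finally have fin: "(\<integral>\<^sup>+ x. ennreal (\<bar>u x\<bar> powr p) \<partial>lborel) \<le> ennreal ((2 * T) powr (p - 2)) * ennreal A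
      + ennreal (4 powr p * M * T powr (p - q) / (1 - 2 powr (p - q)))" .
  have "2 powr (p - q) < 1" using q by (simp add: powr_less_one)
  then have nn: "0 \<le> 4 powr p * M * T powr (p - q) / (1 - 2 powr (p - q))" using M by simp
  have "ennreal ((2 * T) powr (p - 2)) * ennreal A
      + ennreal (4 powr p * M * T powr (p - q) / (1 - 2 powr (p - q)))
      = ennreal ((2 * T) powr (p - 2) * A + 4 powr p * M * T powr (p - q) / (1 - 2 powr (p - q)))"
    using nn A by (simp add: ennreal_mult' ennreal_plus)
  then show ?thesis using fin by simp
qed

lemma alg_Q0:
  fixes N A p :: real
  assumes p: "p > 2" and A: "A \<ge> 0" and H: "\<And>T. T > 0 \<Longrightarrow> N \<le> (2 * T) powr (p - 2) * A"
  shows "N \<le> 0"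
proof (rule ccontr)
  assume "\<not> N \<le> 0" then have N: "N > 0" by simp
  define T where "T = (N / (2 * (A + 1))) powr (1 / (p - 2)) / 2"
  have T: "T > 0" unfolding T_def using N A by simp
  have "(2 * T) powr (p - 2) = N / (2 * (A + 1))"
    unfolding T_def using N A p by (simp add: powr_powr)
  then have "N \<le> N / (2 * (A + 1)) * A" using H[OF T] by simp
  moreover have "N / (2 * (A + 1)) * A < N" using N A by (simp add: field_simps) (smt (verit) mult_nonneg_nonneg)
  ultimately show False by simp
qed

lemma alg_main:
  fixes N A p Q \<theta> K0 q :: real
  assumes p: "p > 2" and A: "A \<ge> 0" and N: "N > 0" and Q: "Q > 0" and th: "\<theta> > 0" and K0: "K0 \<ge> 0"
    and q: "q = 2 + \<theta> * p"
    and H: "\<And>T. T > 0 \<Longrightarrow> N \<le> (2 * T) powr (p - 2) * A + K0 * N powr \<theta> * Q * T powr (p - q)"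
  shows "N \<le> (2 powr (p - 2) * A + K0) powr (p / 2) * Q powr ((p - 2) / (2 * \<theta>))"
proof -
  define Z where "Z = N powr \<theta> * Q"
  have Z: "Z > 0" unfolding Z_def using N Q by simp
  define e where "e = (p - 2) / (\<theta> * p)"
  have qp: "q - 2 = \<theta> * p" using q by simp
  define T where "T = Z powr (1 / (q - 2))"
  have T: "T > 0" unfolding T_def using Z by simp
  have T1: "T powr (p - 2) = Z powr e"
    unfolding T_def e_def qp using Z by (simp add: powr_powr)
  have T2: "Z * T powr (p - q) = Z powr e"
  proof -
    have "Z * T powr (p - q) = Z powr 1 * Z powr ((p - q) / (q - 2))"
      unfolding T_def using Z by (simp add: powr_powr)
    also have "\<dots> = Z powr (1 + (p - q) / (q - 2))" by (simp add: powr_add)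
    also have "1 + (p - q) / (q - 2) = e" unfolding e_def qp q using th p by (simp add: field_simps)
    finally show ?thesis .
  qed
  have "N \<le> (2 * T) powr (p - 2) * A + K0 * (Z * T powr (p - q))"
    using H[OF T] unfolding Z_def by (simp add: algebra_simps)
  also have "(2 * T) powr (p - 2) = 2 powr (p - 2) * T powr (p - 2)"
    using T by (simp add: powr_mult)
  finally have "N \<le> (2 powr (p - 2) * A + K0) * Z powr e"
    unfolding T1 T2 by (simp add: algebra_simps)
  also have "Z powr e = N powr ((p - 2) / p) * Q powr e"
    unfolding Z_def e_def using N Q th p by (simp add: powr_mult powr_powr)
  finally have N1: "N \<le> (2 powr (p - 2) * A + K0) * N powr ((p - 2) / p) * Q powr e"
    by (simp add: algebra_simps)
  define C1 where "C1 = 2 powr (p - 2) * A + K0"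
  have C1: "C1 \<ge> 0" unfolding C1_def using A K0 by simp
  have NN: "N = N powr ((p - 2) / p) * N powr (2 / p)"
    using N p by (simp add: powr_add[symmetric] diff_divide_distrib)
  have "N powr ((p - 2) / p) * N powr (2 / p) \<le> N powr ((p - 2) / p) * (C1 * Q powr e)"
    using N1 NN unfolding C1_def by (simp add: algebra_simps)
  then have N2: "N powr (2 / p) \<le> C1 * Q powr e" using N by simp
  have "N = (N powr (2 / p)) powr (p / 2)" using N p by (simp add: powr_powr)
  also have "\<dots> \<le> (C1 * Q powr e) powr (p / 2)"
    using N2 p by (intro powr_mono2) auto
  also have "\<dots> = C1 powr (p / 2) * Q powr ((p - 2) / (2 * \<theta>))"
    unfolding e_def using C1 Q p th by (simp add: powr_mult powr_powr mult.commute)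
  finally show ?thesis unfolding C1_def .
qed

lemma level_const:
  fixes \<omega> N lam d s p :: real
  assumes om: "\<omega> > 0" and N: "N > 0" and lam: "lam > 0" and d: "d > 0"
  shows "((2 * N / (\<omega> * lam powr p)) powr (1 / d)) powr (d + 2 * s) * lam powr (p - 2) / N
     = (2 / \<omega>) powr (1 + 2 * s / d) * N powr (2 * s / d) * lam powr (- (2 + 2 * s / d * p))"
proof -
  define e where "e = 1 + 2 * s / d"
  have "((2 * N / (\<omega> * lam powr p)) powr (1 / d)) powr (d + 2 * s) = (2 * N / (\<omega> * lam powr p)) powr e"
    unfolding e_def using d by (simp add: powr_powr field_simps)
  also have "\<dots> = (2 / \<omega>) powr e * N powr e * lam powr (- (p * e))"
    using om N lam by (simp add: powr_mult powr_divide powr_powr powr_minus divide_inverse inverse_powr)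
  finally have "((2 * N / (\<omega> * lam powr p)) powr (1 / d)) powr (d + 2 * s) * lam powr (p - 2) / N
     = (2 / \<omega>) powr e * (N powr e / N) * (lam powr (- (p * e)) * lam powr (p - 2))" by simp
  also have "N powr e / N = N powr (2 * s / d)"
    unfolding e_def using N by (simp add: powr_add)
  also have "lam powr (- (p * e)) * lam powr (p - 2) = lam powr (- (2 + 2 * s / d * p))"
    unfolding e_def by (simp add: powr_add[symmetric] algebra_simps)
  finally show ?thesis unfolding e_def .
qed

definition csob :: "real \<Rightarrow> real \<Rightarrow> real \<Rightarrow> real \<Rightarrow> real" where
  "csob A p s d = (2 powr (p - 2) * A + 4 powr p / (1 - 2 powr (p - (2 + 2 * s / d * p)))
        * (2 / unit_ball_vol d) powr (1 + 2 * s / d)) powr (p / 2)"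

lemma sob_finite:
  fixes u :: "real^'n \<Rightarrow> real"
  assumes [measurable]: "u \<in> borel_measurable lborel" and s: "s > 0"
    and p: "p > 2" and pq: "p < 2 + 2 * s / real CARD('n) * p"
    and A: "A \<ge> 0" and L2: "(\<integral>\<^sup>+ x. ennreal ((u x)\<^sup>2) \<partial>lborel) \<le> ennreal A"
    and N: "N \<ge> 0" and intp: "(\<integral>\<^sup>+ x. ennreal (\<bar>u x\<bar> powr p) \<partial>lborel) = ennreal N"
    and Q: "Q \<ge> 0" and gag: "gagliardo_sq s u = ennreal Q"
  shows "N \<le> csob A p s (real CARD('n)) * Q powr ((p - 2) / (2 * (2 * s / real CARD('n))))"
proof (cases "N = 0")
  case True then show ?thesis unfolding csob_def by simp
next
  case False
  then have N: "N > 0" using N by simp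
  define d where "d = real CARD('n)"
  define \<omega> where "\<omega> = unit_ball_vol d"
  define \<theta> where "\<theta> = 2 * s / d"
  define q where "q = 2 + \<theta> * p"
  define D where "D = (2 / \<omega>) powr (1 + \<theta>)"
  define K0 where "K0 = 4 powr p / (1 - 2 powr (p - q)) * D"
  have d: "d > 0" unfolding d_def by simp
  have om: "\<omega> > 0" unfolding \<omega>_def using d by simp
  have th: "\<theta> > 0" unfolding \<theta>_def using s d by simp
  have qp: "q > p" unfolding q_def \<theta>_def d_def using pq by (simp add: mult.commute)
  have Dnn: "D \<ge> 0" unfolding D_def by simp
  have "2 powr (p - q) < 1" using qp by (simp add: powr_less_one)
  then have K0: "K0 \<ge> 0" unfolding K0_def D_def by simp
  have H: "N \<le> (2 * T) powr (p - 2) * A + K0 * N powr \<theta> * Q * T powr (p - q)" if T: "T > 0" for T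
  proof -
    define M where "M = D * N powr \<theta> * Q"
    have M: "M \<ge> 0" unfolding M_def D_def using Q by simp
    have lev: "emeasure lborel {x. 2 * (2 ^ k * T) < \<bar>u x\<bar>} \<le> ennreal (M * (2 ^ k * T) powr (- q))" for k :: nat
    proof -
      have lam: "2 ^ k * T > 0" using T by simp
      have "emeasure lborel {x. 2 * (2 ^ k * T) < \<bar>u x\<bar>}
          \<le> ennreal (((2 * N / (\<omega> * (2 ^ k * T) powr p)) powr (1 / d)) powr (d + 2 * s)
               * (2 ^ k * T) powr (p - 2) / N) * gagliardo_sq s u"
        unfolding \<omega>_def d_def by (rule level_est) (use lam p s N intp in auto)
      also have "((2 * N / (\<omega> * (2 ^ k * T) powr p)) powr (1 / d)) powr (d + 2 * s)
               * (2 ^ k * T) powr (p - 2) / N = D * N powr \<theta> * (2 ^ k * T) powr (- q)"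
        unfolding D_def \<theta>_def q_def by (rule level_const[OF om N lam d])
      finally have "emeasure lborel {x. 2 * (2 ^ k * T) < \<bar>u x\<bar>}
          \<le> ennreal (D * N powr \<theta> * (2 ^ k * T) powr (- q)) * ennreal Q" unfolding gag .
      also have "\<dots> = ennreal (M * (2 ^ k * T) powr (- q))"
        unfolding M_def using Q Dnn by (subst ennreal_mult[symmetric]) (auto simp: ac_simps)
      finally show ?thesis .
    qed
    have "ennreal N \<le> ennreal ((2 * T) powr (p - 2) * A + 4 powr p * M * T powr (p - q) / (1 - 2 powr (p - q)))"
      unfolding intp[symmetric] by (rule dyadic_int[OF _ T _ qp M A L2 lev]) (use p in auto)
    then have "N \<le> (2 * T) powr (p - 2) * A + 4 powr p * M * T powr (p - q) / (1 - 2 powr (p - q))"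
      by (rule ennreal_le_iff[THEN iffD1, rotated]) (use K0 A M \<open>2 powr (p - q) < 1\<close> in simp)
    also have "4 powr p * M * T powr (p - q) / (1 - 2 powr (p - q)) = K0 * N powr \<theta> * Q * T powr (p - q)"
      unfolding K0_def M_def by (simp add: field_simps)
    finally show ?thesis .
  qed
  show ?thesis
  proof (cases "Q = 0")
    case True
    have "N \<le> 0" by (rule alg_Q0[OF p A]) (use H True in simp)
    then show ?thesis using N by simp
  next
    case False
    then have Qp: "Q > 0" using Q by simp
    have "N \<le> (2 powr (p - 2) * A + K0) powr (p / 2) * Q powr ((p - 2) / (2 * \<theta>))"
      by (rule alg_main[OF p A N Qp th K0 q_def H])
    then show ?thesis unfolding csob_def K0_def D_def q_def \<theta>_def \<omega>_def d_def .
  qed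
qed

lemma clamp_lip: "((max (- M) (min M a)) - (max (- M) (min M b)))\<^sup>2 \<le> ((a::real) - b)\<^sup>2"
proof -
  have "\<bar>max (- M) (min M a) - max (- M) (min M b)\<bar> \<le> \<bar>a - b\<bar>" by (auto simp: max_def min_def)
  then show ?thesis by (metis abs_ge_zero power2_abs power_mono)
qed

lemma clamp_abs: "0 \<le> M \<Longrightarrow> \<bar>max (- M) (min M a)\<bar> \<le> \<bar>a::real\<bar>" by (auto simp: max_def min_def)

lemma clamp_mono: "0 \<le> M \<Longrightarrow> M \<le> M' \<Longrightarrow> \<bar>max (- M) (min M a)\<bar> \<le> \<bar>max (- M') (min M' (a::real))\<bar>"
  by (auto simp: max_def min_def)

lemma gag_mono:
  assumes "\<And>x y. (v x - v y)\<^sup>2 \<le> (u x - u y)\<^sup>2"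
  shows "gagliardo_sq s v \<le> gagliardo_sq s u"
  unfolding gagliardo_sq_def
  by (intro nn_integral_mono ennreal_leI divide_right_mono assms) simp

lemma sob_general:
  fixes u :: "real^'n \<Rightarrow> real"
  assumes [measurable]: "u \<in> borel_measurable lborel" and s: "s > 0"
    and p: "p > 2" and pq: "p < 2 + 2 * s / real CARD('n) * p"
    and A: "A \<ge> 0" and L2: "(\<integral>\<^sup>+ x. ennreal ((u x)\<^sup>2) \<partial>lborel) \<le> ennreal A"
    and Q: "Q \<ge> 0" and gag: "gagliardo_sq s u = ennreal Q"
  shows "(\<integral>\<^sup>+ x. ennreal (\<bar>u x\<bar> powr p) \<partial>lborel)
    \<le> ennreal (csob A p s (real CARD('n)) * Q powr ((p - 2) / (2 * (2 * s / real CARD('n)))))"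
proof -
  define \<gamma> where "\<gamma> = (p - 2) / (2 * (2 * s / real CARD('n)))"
  define C where "C = csob A p s (real CARD('n))"
  have C: "C \<ge> 0" unfolding C_def csob_def by simp
  have ga: "\<gamma> \<ge> 0" unfolding \<gamma>_def using p s by simp
  define v where "v M x = max (- real M) (min (real M) (u x))" for M :: nat and x
  have [measurable]: "v M \<in> borel_measurable lborel" for M unfolding v_def by measurable
  have bnd: "(\<integral>\<^sup>+ x. ennreal (\<bar>v M x\<bar> powr p) \<partial>lborel) \<le> ennreal (C * Q powr \<gamma>)" for M
  proof -
    have L2M: "(\<integral>\<^sup>+ x. ennreal ((v M x)\<^sup>2) \<partial>lborel) \<le> ennreal A"
    proof -
      have "(\<integral>\<^sup>+ x. ennreal ((v M x)\<^sup>2) \<partial>lborel) \<le> (\<integral>\<^sup>+ x. ennreal ((u x)\<^sup>2) \<partial>lborel)"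
        unfolding v_def by (intro nn_integral_mono ennreal_leI)
          (metis abs_ge_zero clamp_abs of_nat_0_le_iff power2_abs power_mono)
      then show ?thesis using L2 by simp
    qed
    have fin: "(\<integral>\<^sup>+ x. ennreal (\<bar>v M x\<bar> powr p) \<partial>lborel) < \<infinity>"
    proof -
      have "(\<integral>\<^sup>+ x. ennreal (\<bar>v M x\<bar> powr p) \<partial>lborel)
          \<le> (\<integral>\<^sup>+ x. ennreal (real M powr (p - 2)) * ennreal ((v M x)\<^sup>2) \<partial>lborel)"
      proof (intro nn_integral_mono)
        fix x
        have vb: "\<bar>v M x\<bar> \<le> real M" unfolding v_def by auto
        have "\<bar>v M x\<bar> powr p \<le> real M powr (p - 2) * (v M x)\<^sup>2"
        proof (cases "v M x = 0")
          case False
          have "\<bar>v M x\<bar> powr p = \<bar>v M x\<bar> powr (p - 2) * \<bar>v M x\<bar>\<^sup>2"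
            using powr_l2[of "\<bar>v M x\<bar>" p] False by simp
          also have "\<dots> \<le> real M powr (p - 2) * \<bar>v M x\<bar>\<^sup>2"
            using vb p by (intro mult_right_mono powr_mono2) auto
          finally show ?thesis by simp
        qed (use p in simp)
        then show "ennreal (\<bar>v M x\<bar> powr p) \<le> ennreal (real M powr (p - 2)) * ennreal ((v M x)\<^sup>2)"
          by (simp add: ennreal_mult'[symmetric] ennreal_leI)
      qed
      also have "\<dots> = ennreal (real M powr (p - 2)) * (\<integral>\<^sup>+ x. ennreal ((v M x)\<^sup>2) \<partial>lborel)"
        by (rule nn_integral_cmult) measurable
      also have "\<dots> \<le> ennreal (real M powr (p - 2)) * ennreal A"
        by (intro mult_left_mono L2M) auto
      also have "\<dots> < \<infinity>" by (simp add: ennreal_mult_less_top)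
      finally show ?thesis .
    qed
    define N where "N = enn2real (\<integral>\<^sup>+ x. ennreal (\<bar>v M x\<bar> powr p) \<partial>lborel)"
    have intN: "(\<integral>\<^sup>+ x. ennreal (\<bar>v M x\<bar> powr p) \<partial>lborel) = ennreal N"
      unfolding N_def using fin by (simp add: ennreal_enn2real less_top)
    have gM: "gagliardo_sq s (v M) \<le> gagliardo_sq s u"
      unfolding v_def by (rule gag_mono) (rule clamp_lip)
    define QM where "QM = enn2real (gagliardo_sq s (v M))"
    have gagM: "gagliardo_sq s (v M) = ennreal QM"
    proof -
      have ntop: "gagliardo_sq s (v M) \<noteq> top" using gM gag
        by (metis ennreal_neq_top neq_top_trans)
      then show ?thesis unfolding QM_def by (cases "gagliardo_sq s (v M)") auto
    qed
    have QMQ: "QM \<le> Q" using gM gag gagM Q by simp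
    have "N \<le> C * QM powr \<gamma>"
      unfolding C_def \<gamma>_def
      by (rule sob_finite[OF _ s p pq A L2M _ intN _ gagM]) (auto simp: N_def QM_def)
    also have "\<dots> \<le> C * Q powr \<gamma>"
      using QMQ ga C by (intro mult_left_mono powr_mono2) (auto simp: QM_def)
    finally show ?thesis using intN by (simp add: ennreal_leI)
  qed
  have "(\<integral>\<^sup>+ x. ennreal (\<bar>u x\<bar> powr p) \<partial>lborel)
      \<le> (\<integral>\<^sup>+ x. (SUP M. ennreal (\<bar>v M x\<bar> powr p)) \<partial>lborel)"
  proof (intro nn_integral_mono)
    fix x
    obtain M :: nat where M: "\<bar>u x\<bar> \<le> real M" using real_arch_simple by blast
    then have "v M x = u x" unfolding v_def by auto
    then show "ennreal (\<bar>u x\<bar> powr p) \<le> (SUP M. ennreal (\<bar>v M x\<bar> powr p))"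
      by (intro SUP_upper2[of M]) simp_all
  qed
  also have "\<dots> = (SUP M. (\<integral>\<^sup>+ x. ennreal (\<bar>v M x\<bar> powr p) \<partial>lborel))"
  proof (rule nn_integral_monotone_convergence_SUP)
    show "incseq (\<lambda>M x. ennreal (\<bar>v M x\<bar> powr p))"
      unfolding incseq_def le_fun_def
    proof (intro allI impI)
      fix m n :: nat and x assume "m \<le> n"
      then have "\<bar>v m x\<bar> \<le> \<bar>v n x\<bar>" unfolding v_def by (intro clamp_mono) auto
      then show "ennreal (\<bar>v m x\<bar> powr p) \<le> ennreal (\<bar>v n x\<bar> powr p)"
        using p by (intro ennreal_leI powr_mono2) auto
    qed
  qed measurable
  also have "\<dots> \<le> ennreal (C * Q powr \<gamma>)" by (rule SUP_least) (rule bnd)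
  finally show ?thesis unfolding C_def \<gamma>_def .
qed

lemma prim_deriv:
  assumes "continuous_on UNIV g"
  shows "(primitive g has_real_derivative g x) (at x)"
proof -
  have "((\<lambda>u. LBINT y=ereal 0..u. g y) has_vector_derivative g x) (at x within {- \<bar>x\<bar> - 1..\<bar>x\<bar> + 1})"
    by (rule interval_integral_FTC2) (auto intro: continuous_on_subset[OF assms])
  moreover have "at x within {- \<bar>x\<bar> - 1..\<bar>x\<bar> + 1} = at x"
    by (rule at_within_Icc_at) auto
  ultimately show ?thesis unfolding primitive_def zero_ereal_def
    by (simp add: has_real_derivative_iff_has_vector_derivative del: ereal_eq_0)
qed

lemma prim_0: "primitive g 0 = 0" unfolding primitive_def zero_ereal_def
  by (rule interval_integral_endpoints_same)

lemma G_facts: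
  fixes g :: "real \<Rightarrow> real" and \<alpha> \<beta> :: real
  assumes cont: "continuous_on UNIV g" and odd: "\<And>t. g (- t) = - g t"
    and ab: "\<alpha> < \<beta>" and a0: "\<alpha> > 0"
    and H: "\<And>t. \<alpha> * primitive g t \<le> g t * t \<and> g t * t \<le> \<beta> * primitive g t"
  shows "\<And>t. primitive g t \<ge> 0"
    and "\<And>t. primitive g (- t) = primitive g t"
    and "\<And>t. primitive g t \<le> primitive g 1 * (\<bar>t\<bar> powr \<alpha> + \<bar>t\<bar> powr \<beta>)"
    and "continuous_on UNIV (primitive g)"
proof -
  define G where "G = primitive g"
  have dG: "(G has_real_derivative g x) (at x)" for x unfolding G_def by (rule prim_deriv[OF cont])
  have contG: "continuous_on S G" for S
    using dG by (meson DERIV_isCont continuous_at_imp_continuous_on)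
  then show "continuous_on UNIV (primitive g)" unfolding G_def .
  have Gnn: "G t \<ge> 0" for t
  proof -
    have "\<alpha> * G t \<le> \<beta> * G t" using H[of t] unfolding G_def by linarith
    show ?thesis
    proof (rule ccontr)
      assume "\<not> 0 \<le> G t"
      then have "\<beta> * G t < \<alpha> * G t" using ab by (intro mult_strict_right_mono_neg) auto
      then show False using \<open>\<alpha> * G t \<le> \<beta> * G t\<close> by simp
    qed
  qed
  then show "\<And>t. primitive g t \<ge> 0" unfolding G_def .
  have even: "G (- t) = G t" for t
  proof -
    have "((\<lambda>x. G (- x) - G x) has_real_derivative 0) (at x)" for x
    proof -
      have "((\<lambda>x. G (- x) - G x) has_real_derivative (g (- x) * (- 1) - g x)) (at x)"
        using DERIV_diff[OF DERIV_chain2[OF dG[of "- x"] DERIV_minus[OF DERIV_ident]] dG[of x]] by simp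
      then show ?thesis using odd[of x] by simp
    qed
    then have "G (- t) - G t = G (- 0) - G 0"
      by (intro DERIV_isconst_all) auto
    then show ?thesis by simp
  qed
  then show "\<And>t. primitive g (- t) = primitive g t" unfolding G_def .
  have small: "G t \<le> G 1 * t powr \<alpha>" if t: "0 < t" "t \<le> 1" for t
  proof -
    define h where "h x = G x * x powr (- \<alpha>)" for x
    have dh: "(h has_real_derivative (g x * x powr (- \<alpha>) + G x * (- \<alpha> * x powr (- \<alpha> - 1)))) (at x)"
      if "x > 0" for x
      unfolding h_def by (rule DERIV_cong[OF DERIV_mult[OF dG has_real_derivative_powr[OF that, of "- \<alpha>"]]]) (simp add: algebra_simps)
    have "h t \<le> h 1"
    proof (rule DERIV_nonneg_imp_increasing_open[OF t(2)])
      fix x assume x: "t < x" "x < 1"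
      then have x0: "x > 0" using t by simp
      have "g x * x powr (- \<alpha>) + G x * (- \<alpha> * x powr (- \<alpha> - 1))
          = x powr (- \<alpha> - 1) * (g x * x - \<alpha> * G x)"
        using x0 by (simp add: powr_diff algebra_simps powr_minus field_simps)
      also have "\<dots> \<ge> 0" using H[of x] unfolding G_def by simp
      finally show "\<exists>y. (h has_real_derivative y) (at x) \<and> 0 \<le> y" using dh[OF x0] by blast
    next
      show "continuous_on {t..1} h"
      proof (intro continuous_at_imp_continuous_on ballI)
        fix x assume "x \<in> {t..1}"
        then have "x > 0" using t by auto
        from DERIV_isCont[OF dh[OF this]] show "isCont h x" .
      qed
    qed
    then have "G t * t powr (- \<alpha>) \<le> G 1" unfolding h_def by simp
    then have "G t * t powr (- \<alpha>) * t powr \<alpha> \<le> G 1 * t powr \<alpha>"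
      by (intro mult_right_mono) auto
    then show ?thesis using t by (simp add: powr_minus field_simps)
  qed
  have large: "G t \<le> G 1 * t powr \<beta>" if t: "1 \<le> t" for t
  proof -
    define h where "h x = G x * x powr (- \<beta>)" for x
    have dh: "(h has_real_derivative (g x * x powr (- \<beta>) + G x * (- \<beta> * x powr (- \<beta> - 1)))) (at x)"
      if "x > 0" for x
      unfolding h_def by (rule DERIV_cong[OF DERIV_mult[OF dG has_real_derivative_powr[OF that, of "- \<beta>"]]]) (simp add: algebra_simps)
    have "h 1 \<ge> h t"
    proof (rule DERIV_nonpos_imp_decreasing_open[OF t])
      fix x assume x: "1 < x" "x < t"
      then have x0: "x > 0" by simp
      have "g x * x powr (- \<beta>) + G x * (- \<beta> * x powr (- \<beta> - 1))
          = x powr (- \<beta> - 1) * (g x * x - \<beta> * G x)"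
        using x0 by (simp add: powr_diff algebra_simps powr_minus field_simps)
      also have "\<dots> \<le> 0" using H[of x] unfolding G_def by (simp add: mult_nonneg_nonpos)
      finally show "\<exists>y. (h has_real_derivative y) (at x) \<and> y \<le> 0" using dh[OF x0] by blast
    next
      show "continuous_on {1..t} h"
      proof (intro continuous_at_imp_continuous_on ballI)
        fix x assume "x \<in> {1..t}"
        then have "x > 0" by auto
        from DERIV_isCont[OF dh[OF this]] show "isCont h x" .
      qed
    qed
    then have "G t * t powr (- \<beta>) \<le> G 1" unfolding h_def by simp
    then have "G t * t powr (- \<beta>) * t powr \<beta> \<le> G 1 * t powr \<beta>"
      by (intro mult_right_mono) auto
    then show ?thesis using t by (simp add: powr_minus field_simps)
  qed
  have pos: "G t \<le> G 1 * (t powr \<alpha> + t powr \<beta>)" if "t > 0" for t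
  proof (cases "t \<le> 1")
    case True
    then have "G t \<le> G 1 * t powr \<alpha>" using small that by simp
    also have "\<dots> \<le> G 1 * (t powr \<alpha> + t powr \<beta>)" using Gnn[of 1] by (intro mult_left_mono) auto
    finally show ?thesis .
  next
    case False
    then have "G t \<le> G 1 * t powr \<beta>" using large by simp
    also have "\<dots> \<le> G 1 * (t powr \<alpha> + t powr \<beta>)" using Gnn[of 1] by (intro mult_left_mono) auto
    finally show ?thesis .
  qed
  show "primitive g t \<le> primitive g 1 * (\<bar>t\<bar> powr \<alpha> + \<bar>t\<bar> powr \<beta>)" for t
  proof -
    consider "t = 0" | "t > 0" | "t < 0" by linarith
    then have "G t \<le> G 1 * (\<bar>t\<bar> powr \<alpha> + \<bar>t\<bar> powr \<beta>)"
    proof cases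
      case 1 then show ?thesis using Gnn[of 1] by (simp add: G_def prim_0)
    next
      case 2 then show ?thesis using pos[of t] by simp
    next
      case 3 then show ?thesis using pos[of "- t"] even[of "- t"] by simp
    qed
    then show ?thesis unfolding G_def .
  qed
qed

lemma ennreal_le_suminf_term: "(f k :: ennreal) \<le> (\<Sum>i. f i)"
proof -
  have "sum f {k} \<le> suminf f" by (rule sum_le_suminf) (auto intro: summableI)
  then show ?thesis by simp
qed

lemma kk_pw:
  fixes r s d :: real
  assumes r: "r \<ge> 0" and s: "0 < s" and d: "d > 0"
  shows "ennreal (min (r\<^sup>2) 1 / r powr (d + 2 * s))
    \<le> (\<Sum>k. ennreal (2 powr (real k * (d + 2 * s - 2) + (d + 2 * s))) * indicator {..2 powr (- real k)} r)
      + (\<Sum>k. ennreal (2 powr (- real k * (d + 2 * s))) * indicator {..2 powr (real k + 1)} r)"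
proof -
  define e where "e = d + 2 * s"
  have e: "e > 0" unfolding e_def using s d by simp
  define S1 where "S1 = (\<Sum>k. ennreal (2 powr (real k * (e - 2) + e)) * indicator {..2 powr (- real k)} r)"
  define S2 where "S2 = (\<Sum>k. ennreal (2 powr (- real k * e)) * indicator {..2 powr (real k + 1)} r)"
  have t1: "ennreal (2 powr (real k * (e - 2) + e)) * indicator {..2 powr (- real k)} r \<le> S1" for k
    unfolding S1_def by (rule ennreal_le_suminf_term[where f="\<lambda>k. ennreal (2 powr (real k * (e - 2) + e)) * indicator {..2 powr (- real k)} r"])
  have t2: "ennreal (2 powr (- real k * e)) * indicator {..2 powr (real k + 1)} r \<le> S2" for k
    unfolding S2_def by (rule ennreal_le_suminf_term[where f="\<lambda>k. ennreal (2 powr (- real k * e)) * indicator {..2 powr (real k + 1)} r"])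
  have "ennreal (min (r\<^sup>2) 1 / r powr e) \<le> S1 + S2"
  proof -
    consider "r = 0" | "0 < r" "r < 1" | "r = 1" | "r > 1" using r by linarith
    then show ?thesis
    proof cases
      case 1 then show ?thesis by simp
    next
      case 2
      then have "1 / r > 1" by simp
      then obtain k :: nat where k: "2 ^ k < 1 / r" "1 / r \<le> 2 ^ (k + 1)" using exists_dyadic by blast
      have k1: "r \<le> 2 powr (- real k)"
        using k(1) 2 by (simp add: powr_minus powr_realpow field_simps)
      have k2: "2 powr (- real (k + 1)) \<le> r"
      proof -
        have "2 powr (- real (k + 1)) = 1 / 2 ^ (k + 1)"
          by (simp only: powr_minus_divide powr_realpow[OF zero_less_numeral])
        also have "\<dots> \<le> r" using k(2) 2 by (simp add: field_simps)
        finally show ?thesis .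
      qed
      have "min (r\<^sup>2) 1 / r powr e = r\<^sup>2 / r powr e" using 2 by (simp add: min_def power_le_one)
      also have "\<dots> \<le> (2 powr (- real k))\<^sup>2 / (2 powr (- real (k + 1))) powr e"
        using k1 k2 2 e by (intro frac_le power_mono powr_mono2) auto
      also have "\<dots> = 2 powr (real k * (e - 2) + e)"
      proof -
        have "(2 powr (- real k))\<^sup>2 = (2::real) powr (- 2 * real k)"
          by (simp add: power2_eq_square powr_add[symmetric])
        moreover have "(2 powr (- real (k + 1))) powr e = (2::real) powr (- real (k + 1) * e)"
          by (simp add: powr_powr)
        ultimately show ?thesis by (simp add: powr_diff[symmetric] algebra_simps)
      qed
      finally have "ennreal (min (r\<^sup>2) 1 / r powr e) \<le> ennreal (2 powr (real k * (e - 2) + e)) * indicator {..2 powr (- real k)} r"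
        using k1 by (simp add: ennreal_leI)
      also have "\<dots> \<le> S1" by (rule t1)
      finally show ?thesis by (simp add: add_increasing2)
    next
      case 3
      have "ennreal (min (r\<^sup>2) 1 / r powr e) = ennreal 1" using 3 by simp
      also have "\<dots> \<le> ennreal (2 powr (real 0 * (e - 2) + e)) * indicator {..2 powr (- real 0)} r"
        using 3 e ge_one_powr_ge_zero[of 2 e] by (simp add: ennreal_leI)
      also have "\<dots> \<le> S1" by (rule t1)
      finally show ?thesis by (simp add: add_increasing2)
    next
      case 4
      then obtain k :: nat where k: "2 ^ k < r" "r \<le> 2 ^ (k + 1)" using exists_dyadic by blast
      have k1: "2 powr real k \<le> r" using k(1) by (simp add: powr_realpow)
      have k2: "r \<le> 2 powr (real k + 1)" using k(2) by (simp add: powr_realpow[symmetric] powr_add)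
      have "1 \<le> r\<^sup>2" using 4 by (simp add: one_le_power)
      then have "min (r\<^sup>2) 1 / r powr e = 1 / r powr e" by (simp add: min_def)
      also have "\<dots> \<le> 1 / (2 powr real k) powr e"
        using k1 e by (intro divide_left_mono powr_mono2 mult_pos_pos) auto
      also have "\<dots> = 2 powr (- real k * e)" by (simp add: powr_powr powr_minus_divide)
      finally have "ennreal (min (r\<^sup>2) 1 / r powr e) \<le> ennreal (2 powr (- real k * e)) * indicator {..2 powr (real k + 1)} r"
        using k2 by (simp add: ennreal_leI)
      also have "\<dots> \<le> S2" by (rule t2)
      finally show ?thesis by (simp add: add_increasing)
    qed
  qed
  then show ?thesis unfolding S1_def S2_def e_def .
qed

lemma geom_fin:
  fixes C x :: real assumes "0 \<le> C" "0 \<le> x" "x < 1"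
  shows "(\<Sum>k. ennreal (C * x ^ k)) < \<infinity>"
proof -
  have "summable (\<lambda>k. C * x ^ k)" by (rule summable_mult[OF summable_geometric]) (use assms in simp)
  then have "(\<Sum>k. ennreal (C * x ^ k)) \<noteq> top" by (rule ennreal_suminf_neq_top) (use assms in simp)
  then show ?thesis by (simp add: less_top)
qed

lemma J1_fin:
  fixes s :: real
  assumes s: "0 < s" "s < 1"
  shows "(\<integral>\<^sup>+ (h::real^'n). ennreal (min ((norm h)\<^sup>2) 1 / norm h powr (real CARD('n) + 2 * s)) \<partial>lborel) < \<infinity>"
proof -
  define d where "d = real CARD('n)"
  define e where "e = d + 2 * s"
  define \<omega> where "\<omega> = unit_ball_vol d"
  have d: "d > 0" unfolding d_def by simp
  have om: "\<omega> > 0" unfolding \<omega>_def using d by simp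
  define a where "a k = 2 powr (real k * (e - 2) + e)" for k :: nat
  define b where "b k = 2 powr (- real k * e)" for k :: nat
  define \<rho> where "\<rho> k = 2 powr (- real k)" for k :: nat
  define \<sigma> where "\<sigma> k = 2 powr (real k + 1)" for k :: nat
  have cb: "emeasure lborel {h::real^'n. norm h \<in> {..r}} = ennreal (\<omega> * r ^ CARD('n))" if "r \<ge> 0" for r
  proof -
    have "{h::real^'n. norm h \<in> {..r}} = cball 0 r" by (auto simp: dist_norm)
    then show ?thesis using emeasure_cball[of r "0::real^'n"] that unfolding \<omega>_def d_def by simp
  qed
  have "(\<integral>\<^sup>+ (h::real^'n). ennreal (min ((norm h)\<^sup>2) 1 / norm h powr e) \<partial>lborel)
      \<le> (\<integral>\<^sup>+ (h::real^'n). (\<Sum>k. ennreal (a k) * indicator {..\<rho> k} (norm h))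
            + (\<Sum>k. ennreal (b k) * indicator {..\<sigma> k} (norm h)) \<partial>lborel)"
    unfolding a_def b_def \<rho>_def \<sigma>_def e_def
    by (intro nn_integral_mono kk_pw) (use s d in auto)
  also have "\<dots> = (\<Sum>k. ennreal (a k) * emeasure lborel {h::real^'n. norm h \<in> {..\<rho> k}})
         + (\<Sum>k. ennreal (b k) * emeasure lborel {h::real^'n. norm h \<in> {..\<sigma> k}})"
  proof -
    have m1: "(\<lambda>h::real^'n. indicator {..r} (norm h) :: ennreal) = indicator {h. norm h \<in> {..r}}" for r
      by (auto simp: indicator_def)
    show ?thesis
      by (subst nn_integral_add) (auto simp: nn_integral_suminf nn_integral_cmult m1)
  qed
  also have "\<dots> = (\<Sum>k. ennreal (\<omega> * 2 powr e * (2 powr (2 * s - 2)) ^ k))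
         + (\<Sum>k. ennreal (\<omega> * 2 powr d * (2 powr (- 2 * s)) ^ k))"
  proof -
    have "ennreal (a k) * emeasure lborel {h::real^'n. norm h \<in> {..\<rho> k}} = ennreal (\<omega> * 2 powr e * (2 powr (2 * s - 2)) ^ k)" for k
    proof -
      have r: "(\<rho> k) ^ CARD('n) = 2 powr (- real k * d)"
        unfolding \<rho>_def d_def by (simp add: powr_realpow[symmetric] powr_powr)
      have "a k * (\<omega> * \<rho> k ^ CARD('n)) = \<omega> * (2 powr (real k * (e - 2) + e) * 2 powr (- real k * d))"
        unfolding a_def r by simp
      also have "\<dots> = \<omega> * 2 powr (real k * (e - 2) + e + - real k * d)" by (simp only: powr_add[symmetric])
      also have "real k * (e - 2) + e + - real k * d = e + real k * (2 * s - 2)" unfolding e_def by (simp add: algebra_simps)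
      also have "(2::real) powr (e + real k * (2 * s - 2)) = 2 powr e * (2 powr (2 * s - 2)) ^ k"
        by (simp only: powr_add pow2_pow)
      finally have eq: "a k * (\<omega> * \<rho> k ^ CARD('n)) = \<omega> * 2 powr e * (2 powr (2 * s - 2)) ^ k" by simp
      have "ennreal (a k) * emeasure lborel {h::real^'n. norm h \<in> {..\<rho> k}} = ennreal (a k) * ennreal (\<omega> * \<rho> k ^ CARD('n))"
        using cb[of "\<rho> k"] unfolding \<rho>_def by simp
      also have "\<dots> = ennreal (a k * (\<omega> * \<rho> k ^ CARD('n)))" unfolding a_def by (rule ennreal_mult'[symmetric]) simp
      finally show ?thesis unfolding eq .
    qed
    moreover have "ennreal (b k) * emeasure lborel {h::real^'n. norm h \<in> {..\<sigma> k}} = ennreal (\<omega> * 2 powr d * (2 powr (- 2 * s)) ^ k)" for k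
    proof -
      have r: "(\<sigma> k) ^ CARD('n) = 2 powr ((real k + 1) * d)"
        unfolding \<sigma>_def d_def by (simp add: powr_realpow[symmetric] powr_powr)
      have "b k * (\<omega> * \<sigma> k ^ CARD('n)) = \<omega> * (2 powr (- real k * e) * 2 powr ((real k + 1) * d))"
        unfolding b_def r by simp
      also have "\<dots> = \<omega> * 2 powr (- real k * e + (real k + 1) * d)" by (simp only: powr_add[symmetric])
      also have "- real k * e + (real k + 1) * d = d + real k * (- 2 * s)" unfolding e_def by (simp add: algebra_simps)
      also have "(2::real) powr (d + real k * (- 2 * s)) = 2 powr d * (2 powr (- 2 * s)) ^ k"
        by (simp only: powr_add pow2_pow)
      finally have eq: "b k * (\<omega> * \<sigma> k ^ CARD('n)) = \<omega> * 2 powr d * (2 powr (- 2 * s)) ^ k" by simp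
      have "ennreal (b k) * emeasure lborel {h::real^'n. norm h \<in> {..\<sigma> k}} = ennreal (b k) * ennreal (\<omega> * \<sigma> k ^ CARD('n))"
        using cb[of "\<sigma> k"] unfolding \<sigma>_def by simp
      also have "\<dots> = ennreal (b k * (\<omega> * \<sigma> k ^ CARD('n)))" unfolding b_def by (rule ennreal_mult'[symmetric]) simp
      finally show ?thesis unfolding eq .
    qed
    ultimately show ?thesis by simp
  qed
  also have "\<dots> < \<infinity>"
  proof -
    have "2 powr (2 * s - 2) < (1::real)" using s by (simp add: powr_less_one)
    moreover have "2 powr (- 2 * s) < (1::real)" using s by (simp add: powr_less_one)
    ultimately have g1: "(\<Sum>k. ennreal (\<omega> * 2 powr e * (2 powr (2 * s - 2)) ^ k)) < \<infinity>"
        and g2: "(\<Sum>k. ennreal (\<omega> * 2 powr d * (2 powr (- 2 * s)) ^ k)) < \<infinity>"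
      using om by (intro geom_fin; simp)+
    show ?thesis using g1 g2 unfolding infinity_ennreal_def ennreal_add_less_top by blast
  qed
  finally show ?thesis unfolding e_def d_def .
qed

lemma nn_integral_transl:
  fixes f :: "real^'n \<Rightarrow> ennreal"
  assumes [measurable]: "f \<in> borel_measurable borel"
  shows "(\<integral>\<^sup>+ y. f (y - x) \<partial>lborel) = (\<integral>\<^sup>+ h. f h \<partial>lborel)"
proof -
  have "(\<integral>\<^sup>+ h. f h \<partial>lborel) = (\<integral>\<^sup>+ h. f h \<partial>(distr lborel borel ((+) (- x))))"
    by (subst lborel_distr_plus) (rule refl)
  also have "\<dots> = (\<integral>\<^sup>+ y. f (- x + y) \<partial>lborel)"
    by (subst nn_integral_distr) auto
  finally show ?thesis by simp
qed

lemma nn_integral_scale: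
  fixes f :: "real^'n \<Rightarrow> ennreal" and R :: real
  assumes [measurable]: "f \<in> borel_measurable borel" and R: "R > 0"
  shows "(\<integral>\<^sup>+ h. f h \<partial>lborel) = ennreal (R ^ CARD('n)) * (\<integral>\<^sup>+ h. f (R *\<^sub>R h) \<partial>lborel)"
proof -
  have "(\<integral>\<^sup>+ h. f h \<partial>lborel)
     = (\<integral>\<^sup>+ h. f h \<partial>(density (distr lborel borel (\<lambda>x. 0 + R *\<^sub>R x)) (\<lambda>_. ennreal (\<bar>R\<bar> ^ DIM(real^'n)))))"
    by (subst (1) lborel_affine[of R 0]) (use R in auto)
  also have "\<dots> = (\<integral>\<^sup>+ h. ennreal (R ^ CARD('n)) * f (R *\<^sub>R h) \<partial>lborel)"
    using R by (simp add: nn_integral_density nn_integral_distr)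
  also have "\<dots> = ennreal (R ^ CARD('n)) * (\<integral>\<^sup>+ h. f (R *\<^sub>R h) \<partial>lborel)"
    by (rule nn_integral_cmult) measurable
  finally show ?thesis .
qed

lemma aux_div: "(R::real) > 0 \<Longrightarrow> m / (R powr e * n) = R powr (- e) * (m / n)"
  by (simp add: powr_minus divide_inverse mult.commute mult.left_commute)

definition kR :: "real \<Rightarrow> real \<Rightarrow> real^'n \<Rightarrow> real" where
  "kR s R h = min ((norm h)\<^sup>2 / R\<^sup>2) 1 / norm h powr (real CARD('n) + 2 * s)"

lemma kR_meas[measurable]: "kR s R \<in> borel_measurable borel"
  unfolding kR_def by measurable

lemma kR_nonneg: "kR s R h \<ge> 0" unfolding kR_def by simp

lemma kR_scale:
  fixes h :: "real^'n"
  assumes R: "R > 0"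
  shows "kR s R (R *\<^sub>R h) = R powr (- (real CARD('n) + 2 * s)) * kR s 1 h"
proof -
  have "(norm (R *\<^sub>R h))\<^sup>2 / R\<^sup>2 = (norm h)\<^sup>2" using R by (simp add: power_mult_distrib)
  moreover have "norm (R *\<^sub>R h) powr (real CARD('n) + 2 * s) = R powr (real CARD('n) + 2 * s) * norm h powr (real CARD('n) + 2 * s)"
    using R by (simp add: powr_mult)
  ultimately show ?thesis unfolding kR_def using R aux_div[OF R] by simp
qed

lemma JR_eq:
  assumes R: "R > 0"
  shows "(\<integral>\<^sup>+ (h::real^'n). ennreal (kR s R h) \<partial>lborel)
    = ennreal (R powr (- 2 * s)) * (\<integral>\<^sup>+ (h::real^'n). ennreal (kR s 1 h) \<partial>lborel)"
proof -
  have "(\<integral>\<^sup>+ (h::real^'n). ennreal (kR s R h) \<partial>lborel)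
      = ennreal (R ^ CARD('n)) * (\<integral>\<^sup>+ (h::real^'n). ennreal (kR s R (R *\<^sub>R h)) \<partial>lborel)"
    by (rule nn_integral_scale[OF _ R]) measurable
  also have "\<dots> = ennreal (R ^ CARD('n)) * (\<integral>\<^sup>+ (h::real^'n). ennreal (R powr (- (real CARD('n) + 2 * s))) * ennreal (kR s 1 h) \<partial>lborel)"
    using R by (simp add: kR_scale ennreal_mult')
  also have "\<dots> = ennreal (R ^ CARD('n)) * (ennreal (R powr (- (real CARD('n) + 2 * s))) * (\<integral>\<^sup>+ (h::real^'n). ennreal (kR s 1 h) \<partial>lborel))"
    by (subst nn_integral_cmult) auto
  also have "\<dots> = ennreal (R ^ CARD('n) * R powr (- (real CARD('n) + 2 * s))) * (\<integral>\<^sup>+ (h::real^'n). ennreal (kR s 1 h) \<partial>lborel)"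
    using R by (simp add: ennreal_mult' mult.assoc)
  also have "R ^ CARD('n) * R powr (- (real CARD('n) + 2 * s)) = R powr (- 2 * s)"
    using R by (simp add: powr_realpow[symmetric] powr_add[symmetric])
  finally show ?thesis .
qed

lemma J1_fin':
  assumes "0 < s" "s < 1"
  shows "(\<integral>\<^sup>+ (h::real^'n). ennreal (kR s 1 h) \<partial>lborel) < \<infinity>"
  using J1_fin[OF assms, where 'n='n] unfolding kR_def by simp

definition tent :: "real \<Rightarrow> real^'n \<Rightarrow> real" where
  "tent R x = max 0 (1 - norm x / R)"

lemma tent_cont: "continuous_on UNIV (tent R)"
  unfolding tent_def by (cases "R = 0") (auto intro!: continuous_intros)

lemma tent_meas[measurable]: "tent R \<in> borel_measurable borel"
  using tent_cont by (rule borel_measurable_continuous_onI)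

lemma tent_bounds: "R > 0 \<Longrightarrow> 0 \<le> tent R x \<and> tent R x \<le> 1"
  unfolding tent_def by auto

lemma tent_zero: "R > 0 \<Longrightarrow> norm x > R \<Longrightarrow> tent R x = 0"
  unfolding tent_def by auto

lemma tent_half: "R > 0 \<Longrightarrow> norm x \<le> R / 2 \<Longrightarrow> tent R x \<ge> 1 / 2"
  unfolding tent_def by (auto simp: field_simps)

lemma tent_diff:
  assumes R: "R > 0"
  shows "(tent R x - tent R y)\<^sup>2 \<le> min ((norm (x - y))\<^sup>2 / R\<^sup>2) 1"
proof -
  have a: "\<bar>tent R x - tent R y\<bar> \<le> norm (x - y) / R"
  proof -
    have "\<bar>tent R x - tent R y\<bar> \<le> \<bar>(1 - norm x / R) - (1 - norm y / R)\<bar>"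
      unfolding tent_def by (auto simp: max_def)
    also have "(1 - norm x / R) - (1 - norm y / R) = (norm y - norm x) / R" by (simp add: diff_divide_distrib)
    then have "\<bar>(1 - norm x / R) - (1 - norm y / R)\<bar> = \<bar>norm y - norm x\<bar> / R" using R by (simp add: abs_divide)
    also have "\<dots> \<le> norm (x - y) / R" using R
      by (intro divide_right_mono) (auto simp: norm_triangle_ineq3 abs_minus_commute)
    finally show ?thesis .
  qed
  have b: "\<bar>tent R x - tent R y\<bar> \<le> 1" using tent_bounds[OF R, of x] tent_bounds[OF R, of y] by auto
  have "(tent R x - tent R y)\<^sup>2 \<le> (norm (x - y) / R)\<^sup>2"
    using a by (metis abs_ge_zero power2_abs power_mono)
  moreover have "(tent R x - tent R y)\<^sup>2 \<le> 1"
    using b by (metis abs_ge_zero abs_square_le_1 power2_abs)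
  ultimately show ?thesis by (simp add: power_divide)
qed

lemma tent_gag:
  fixes s R :: real
  assumes R: "R > 0" and s: "s > 0"
  shows "gagliardo_sq s (tent R :: real^'n \<Rightarrow> real)
     \<le> 2 * emeasure lborel (cball (0::real^'n) R) * (\<integral>\<^sup>+ (h::real^'n). ennreal (kR s R h) \<partial>lborel)"
proof -
  define J where "J = (\<integral>\<^sup>+ (h::real^'n). ennreal (kR s R h) \<partial>lborel)"
  define B where "B = cball (0::real^'n) R"
  have [measurable]: "B \<in> sets borel" unfolding B_def by simp
  define f1 where "f1 z = indicator B (fst z) * ennreal (kR s R (snd z - fst z))" for z :: "(real^'n) \<times> (real^'n)"
  define f2 where "f2 z = indicator B (snd z) * ennreal (kR s R (fst z - snd z))" for z :: "(real^'n) \<times> (real^'n)"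
  have [measurable]: "f1 \<in> borel_measurable (lborel \<Otimes>\<^sub>M lborel)" unfolding f1_def by measurable
  have [measurable]: "f2 \<in> borel_measurable (lborel \<Otimes>\<^sub>M lborel)" unfolding f2_def by measurable
  have pw: "ennreal ((tent R (fst z) - tent R (snd z))\<^sup>2 / norm (fst z - snd z) powr (real CARD('n) + 2 * s))
      \<le> f1 z + f2 z" for z
  proof -
    obtain x y where z: "z = (x, y)" by (cases z)
    have kk: "(tent R x - tent R y)\<^sup>2 / norm (x - y) powr (real CARD('n) + 2 * s) \<le> kR s R (x - y)"
      unfolding kR_def by (intro divide_right_mono tent_diff R) simp
    have sym: "kR s R (y - x) = kR s R (x - y)" unfolding kR_def by (simp add: norm_minus_commute)
    consider "x \<in> B" | "y \<in> B" | "x \<notin> B" "y \<notin> B" by blast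
    then show ?thesis
    proof cases
      case 1
      then have "ennreal ((tent R x - tent R y)\<^sup>2 / norm (x - y) powr (real CARD('n) + 2 * s)) \<le> f1 z"
        unfolding f1_def z using kk sym by (simp add: ennreal_leI)
      then show ?thesis unfolding z by (simp add: add_increasing2)
    next
      case 2
      then have "ennreal ((tent R x - tent R y)\<^sup>2 / norm (x - y) powr (real CARD('n) + 2 * s)) \<le> f2 z"
        unfolding f2_def z using kk by (simp add: ennreal_leI)
      then show ?thesis unfolding z by (simp add: add_increasing)
    next
      case 3
      then have "tent R x = 0" "tent R y = 0" using tent_zero[OF R, of x] tent_zero[OF R, of y]
        unfolding B_def by (auto simp: dist_norm)
      then show ?thesis unfolding z by simp
    qed
  qed
  have "gagliardo_sq s (tent R :: real^'n \<Rightarrow> real) \<le> (\<integral>\<^sup>+ z. f1 z + f2 z \<partial>(lborel \<Otimes>\<^sub>M lborel))"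
    unfolding gagliardo_sq_def by (rule nn_integral_mono) (rule pw)
  also have "\<dots> = (\<integral>\<^sup>+ z. f1 z \<partial>(lborel \<Otimes>\<^sub>M lborel)) + (\<integral>\<^sup>+ z. f2 z \<partial>(lborel \<Otimes>\<^sub>M lborel))"
    by (rule nn_integral_add) measurable
  also have "(\<integral>\<^sup>+ z. f1 z \<partial>(lborel \<Otimes>\<^sub>M lborel)) = emeasure lborel B * J"
  proof -
    have "(\<integral>\<^sup>+ z. f1 z \<partial>(lborel \<Otimes>\<^sub>M lborel)) = (\<integral>\<^sup>+ x. \<integral>\<^sup>+ y. f1 (x, y) \<partial>lborel \<partial>lborel)"
      by (rule lborel.nn_integral_fst[symmetric]) measurable
    also have "\<dots> = (\<integral>\<^sup>+ x. indicator B x * J \<partial>lborel)"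
    proof (rule nn_integral_cong)
      fix x
      have "(\<integral>\<^sup>+ y. f1 (x, y) \<partial>lborel) = indicator B x * (\<integral>\<^sup>+ y. ennreal (kR s R (y - x)) \<partial>lborel)"
        unfolding f1_def by (simp add: nn_integral_cmult)
      also have "(\<integral>\<^sup>+ y. ennreal (kR s R (y - x)) \<partial>lborel) = J"
        unfolding J_def by (rule nn_integral_transl[of "\<lambda>h. ennreal (kR s R h)"]) measurable
      finally show "(\<integral>\<^sup>+ y. f1 (x, y) \<partial>lborel) = indicator B x * J" .
    qed
    also have "\<dots> = J * emeasure lborel B"
      by (simp add: nn_integral_cmult_indicator mult.commute)
    finally show ?thesis by (simp add: mult.commute)
  qed
  also have "(\<integral>\<^sup>+ z. f2 z \<partial>(lborel \<Otimes>\<^sub>M lborel)) = emeasure lborel B * J"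
  proof -
    have "(\<integral>\<^sup>+ z. f2 z \<partial>(lborel \<Otimes>\<^sub>M lborel)) = (\<integral>\<^sup>+ y. \<integral>\<^sup>+ x. f2 (x, y) \<partial>lborel \<partial>lborel)"
      by (rule lborel_pair.nn_integral_snd[symmetric]) measurable
    also have "\<dots> = (\<integral>\<^sup>+ y. indicator B y * J \<partial>lborel)"
    proof (rule nn_integral_cong)
      fix y
      have "(\<integral>\<^sup>+ x. f2 (x, y) \<partial>lborel) = indicator B y * (\<integral>\<^sup>+ x. ennreal (kR s R (x - y)) \<partial>lborel)"
        unfolding f2_def by (simp add: nn_integral_cmult)
      also have "(\<integral>\<^sup>+ x. ennreal (kR s R (x - y)) \<partial>lborel) = J"
        unfolding J_def by (rule nn_integral_transl[of "\<lambda>h. ennreal (kR s R h)"]) measurable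
      finally show "(\<integral>\<^sup>+ x. f2 (x, y) \<partial>lborel) = indicator B y * J" .
    qed
    also have "\<dots> = J * emeasure lborel B"
      by (simp add: nn_integral_cmult_indicator mult.commute)
    finally show ?thesis by (simp add: mult.commute)
  qed
  finally show ?thesis unfolding J_def B_def by (simp add: mult_2 distrib_right)
qed

definition J1r :: "real \<Rightarrow> ('n::finite) itself \<Rightarrow> real" where
  "J1r s _ = enn2real (\<integral>\<^sup>+ (h::real^'n). ennreal (kR s 1 h) \<partial>lborel)"

lemma enn_aux: "0 \<le> A \<Longrightarrow> 0 \<le> B \<Longrightarrow> 0 \<le> (C::real) \<Longrightarrow>
  ennreal (c\<^sup>2) * (2 * ennreal A * (ennreal B * ennreal C)) = ennreal (c\<^sup>2 * (2 * A * B * C))"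
  by (simp add: ennreal_mult ennreal_mult' mult.assoc)

lemma gag_cmult:
  fixes u :: "real^'n \<Rightarrow> real"
  assumes [measurable]: "u \<in> borel_measurable borel"
  shows "gagliardo_sq s (\<lambda>x. c * u x) = ennreal (c\<^sup>2) * gagliardo_sq s u"
proof -
  have "gagliardo_sq s (\<lambda>x. c * u x) = (\<integral>\<^sup>+ z. ennreal (c\<^sup>2) * ennreal ((u (fst z) - u (snd z))\<^sup>2 /
           norm (fst z - snd z) powr (real CARD('n) + 2 * s)) \<partial>(lborel \<Otimes>\<^sub>M lborel))"
    unfolding gagliardo_sq_def
    by (intro nn_integral_cong) (simp add: ennreal_mult'[symmetric] power_mult_distrib right_diff_distrib[symmetric])
  also have "\<dots> = ennreal (c\<^sup>2) * gagliardo_sq s u"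
    unfolding gagliardo_sq_def by (rule nn_integral_cmult) measurable
  finally show ?thesis .
qed

lemma tent_gag_bound:
  fixes R s c :: real
  assumes R: "R > 0" and s: "0 < s" "s < 1"
  shows "gagliardo_sq s (\<lambda>x::real^'n. c * tent R x)
    \<le> ennreal (c\<^sup>2 * (2 * (unit_ball_vol (real CARD('n)) * R ^ CARD('n)) * R powr (- 2 * s) * J1r s TYPE('n)))"
proof -
  define \<omega> where "\<omega> = unit_ball_vol (real CARD('n))"
  have J: "(\<integral>\<^sup>+ (h::real^'n). ennreal (kR s 1 h) \<partial>lborel) = ennreal (J1r s TYPE('n))"
    unfolding J1r_def using J1_fin'[OF s, where 'n='n] by (simp add: ennreal_enn2real less_top)
  have "gagliardo_sq s (\<lambda>x::real^'n. c * tent R x) = ennreal (c\<^sup>2) * gagliardo_sq s (tent R :: real^'n \<Rightarrow> real)"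
    by (rule gag_cmult) measurable
  also have "\<dots> \<le> ennreal (c\<^sup>2) * (2 * emeasure lborel (cball (0::real^'n) R) * (\<integral>\<^sup>+ (h::real^'n). ennreal (kR s R h) \<partial>lborel))"
    by (intro mult_left_mono tent_gag R s) auto
  also have "\<dots> = ennreal (c\<^sup>2) * (2 * ennreal (\<omega> * R ^ CARD('n)) * (ennreal (R powr (- 2 * s)) * ennreal (J1r s TYPE('n))))"
    using emeasure_cball[of R "0::real^'n"] R unfolding JR_eq[OF R] J \<omega>_def by simp
  also have "\<dots> = ennreal (c\<^sup>2 * (2 * (\<omega> * R ^ CARD('n)) * R powr (- 2 * s) * J1r s TYPE('n)))"
  proof -
    have "J1r s TYPE('n) \<ge> 0" by (simp add: J1r_def)
    moreover have "\<omega> * R ^ CARD('n) \<ge> 0" unfolding \<omega>_def using R by simp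
    ultimately show ?thesis using R by (intro enn_aux) auto
  qed
  finally show ?thesis unfolding \<omega>_def .
qed

lemma tent_L2:
  fixes R :: real assumes R: "R > 0"
  shows "integrable lborel (\<lambda>x::real^'n. (tent R x)\<^sup>2)"
    and "(\<integral>x. (tent R x)\<^sup>2 \<partial>(lborel :: (real^'n) measure)) \<ge> unit_ball_vol (real CARD('n)) * (R / 2) ^ CARD('n) / 4"
proof -
  define \<omega> where "\<omega> = unit_ball_vol (real CARD('n))"
  have om: "\<omega> > 0" unfolding \<omega>_def by simp
  define I where "I = (\<integral>\<^sup>+ x. ennreal ((tent R x)\<^sup>2) \<partial>(lborel :: (real^'n) measure))"
  have up: "I \<le> ennreal (\<omega> * R ^ CARD('n))"
  proof -
    have "I \<le> (\<integral>\<^sup>+ x. indicator (cball (0::real^'n) R) x \<partial>lborel)"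
      unfolding I_def
    proof (rule nn_integral_mono)
      fix x :: "real^'n"
      show "ennreal ((tent R x)\<^sup>2) \<le> indicator (cball 0 R) x"
      proof (cases "x \<in> cball 0 R")
        case True
        have "(tent R x)\<^sup>2 \<le> 1" using tent_bounds[OF R, of x] by (simp add: power_le_one)
        then show ?thesis using True by simp
      next
        case False
        then have "tent R x = 0" using tent_zero[OF R, of x] by (simp add: dist_norm)
        then show ?thesis by simp
      qed
    qed
    also have "\<dots> = ennreal (\<omega> * R ^ CARD('n))" using emeasure_cball[of R "0::real^'n"] R
      unfolding \<omega>_def by simp
    finally show ?thesis .
  qed
  have lo: "ennreal (\<omega> * (R / 2) ^ CARD('n) / 4) \<le> I"
  proof -
    have "ennreal (\<omega> * (R / 2) ^ CARD('n) / 4) = ennreal (1 / 4) * emeasure lborel (cball (0::real^'n) (R / 2))"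
      using emeasure_cball[of "R / 2" "0::real^'n"] R unfolding \<omega>_def by (simp add: ennreal_mult'[symmetric])
    also have "\<dots> = (\<integral>\<^sup>+ x. ennreal (1 / 4) * indicator (cball (0::real^'n) (R / 2)) x \<partial>lborel)"
      by (simp add: nn_integral_cmult_indicator)
    also have "\<dots> \<le> I" unfolding I_def
    proof (rule nn_integral_mono)
      fix x :: "real^'n"
      show "ennreal (1 / 4) * indicator (cball 0 (R / 2)) x \<le> ennreal ((tent R x)\<^sup>2)"
      proof (cases "x \<in> cball 0 (R / 2)")
        case True
        then have "tent R x \<ge> 1 / 2" using tent_half[OF R, of x] by (simp add: dist_norm)
        then have "(1 / 2)\<^sup>2 \<le> (tent R x)\<^sup>2" by (intro power_mono) auto
        then have "1 / 4 \<le> (tent R x)\<^sup>2" by (simp add: power_divide)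
        then show ?thesis using True by (simp add: ennreal_leI)
      qed simp
    qed
    finally show ?thesis .
  qed
  show int: "integrable lborel (\<lambda>x::real^'n. (tent R x)\<^sup>2)"
  proof (rule integrableI_bounded)
    show "(\<integral>\<^sup>+ x. ennreal (norm ((tent R x)\<^sup>2)) \<partial>(lborel :: (real^'n) measure)) < \<infinity>"
      using up unfolding I_def by (simp add: order.strict_trans1)
  qed measurable
  have "(\<integral>x. (tent R x)\<^sup>2 \<partial>(lborel :: (real^'n) measure)) = enn2real I"
    unfolding I_def by (rule integral_eq_nn_integral) auto
  moreover have "\<omega> * (R / 2) ^ CARD('n) / 4 \<le> enn2real I"
  proof -
    have "enn2real (ennreal (\<omega> * (R / 2) ^ CARD('n) / 4)) \<le> enn2real I"
      using lo up by (intro enn2real_mono) (auto simp: order.strict_trans1)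
    then show ?thesis using om R by simp
  qed
  ultimately show "(\<integral>x. (tent R x)\<^sup>2 \<partial>(lborel :: (real^'n) measure)) \<ge> unit_ball_vol (real CARD('n)) * (R / 2) ^ CARD('n) / 4"
    unfolding \<omega>_def by simp
qed

lemma frac_tent_bound:
  fixes R s c :: real
  assumes R: "R > 0" and s: "0 < s" "s < 1"
  shows "gagliardo_sq s (\<lambda>x::real^'n. c * tent R x) < \<infinity>"
    and "frac_grad_sq s (\<lambda>x::real^'n. c * tent R x)
      \<le> c\<^sup>2 * (2 * (unit_ball_vol (real CARD('n)) * R ^ CARD('n)) * R powr (- 2 * s) * J1r s TYPE('n))"
proof -
  note b = tent_gag_bound[OF R s, of c, where 'n='n]
  then show "gagliardo_sq s (\<lambda>x::real^'n. c * tent R x) < \<infinity>"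
    by (simp add: order.strict_trans1)
  show "frac_grad_sq s (\<lambda>x::real^'n. c * tent R x)
      \<le> c\<^sup>2 * (2 * (unit_ball_vol (real CARD('n)) * R ^ CARD('n)) * R powr (- 2 * s) * J1r s TYPE('n))"
  proof -
    have "frac_grad_sq s (\<lambda>x::real^'n. c * tent R x)
      \<le> enn2real (ennreal (c\<^sup>2 * (2 * (unit_ball_vol (real CARD('n)) * R ^ CARD('n)) * R powr (- 2 * s) * J1r s TYPE('n))))"
      unfolding frac_grad_sq_def by (intro enn2real_mono b) simp
    also have "\<dots> = c\<^sup>2 * (2 * (unit_ball_vol (real CARD('n)) * R ^ CARD('n)) * R powr (- 2 * s) * J1r s TYPE('n))"
      using R by (intro enn2real_ennreal) (auto simp: J1r_def)
    finally show ?thesis .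
  qed
qed

lemma exists_small:
  fixes s1 s2 a \<epsilon> :: real
  assumes s: "0 < s1" "s1 < s2" "s2 < 1" and a: "a > 0" and eps: "\<epsilon> > 0"
  shows "\<exists>u :: real^'n \<Rightarrow> real. u \<in> S_sphere s1 s2 a \<and> frac_grad_sq s1 u + frac_grad_sq s2 u \<le> \<epsilon>"
proof -
  define n where "n = CARD('n)"
  define \<omega> where "\<omega> = unit_ball_vol (real CARD('n))"
  have om: "\<omega> > 0" unfolding \<omega>_def by simp
  define Jm where "Jm = J1r s1 TYPE('n) + J1r s2 TYPE('n)"
  have Jm: "Jm \<ge> 0" unfolding Jm_def J1r_def by simp
  define M0 where "M0 = 8 * 2 ^ n * a * Jm"
  have M0: "M0 \<ge> 0" unfolding M0_def using a Jm by simp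
  define R where "R = max 1 ((M0 / \<epsilon>) powr (1 / (2 * s1)))"
  have R1: "R \<ge> 1" unfolding R_def by simp
  then have R: "R > 0" by simp
  define L where "L = (\<integral>x. (tent R x)\<^sup>2 \<partial>(lborel :: (real^'n) measure))"
  have Lint: "integrable lborel (\<lambda>x::real^'n. (tent R x)\<^sup>2)" by (rule tent_L2(1)[OF R])
  have Llo: "L \<ge> \<omega> * (R / 2) ^ n / 4" unfolding L_def \<omega>_def n_def by (rule tent_L2(2)[OF R])
  have Lpos: "L > 0" using Llo om R by (smt (verit) divide_pos_pos mult_pos_pos zero_less_power)
  define c where "c = sqrt (a / L)"
  have c2: "c\<^sup>2 = a / L" unfolding c_def using a Lpos by simp
  define u where "u x = c * tent R x" for x :: "real^'n"
  have um[measurable]: "u \<in> borel_measurable lborel" unfolding u_def by measurable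
  have usq: "(\<lambda>x. (u x)\<^sup>2) = (\<lambda>x. c\<^sup>2 * (tent R x)\<^sup>2)" unfolding u_def by (simp add: power_mult_distrib)
  have L2u: "L2_norm_sq u = a"
  proof -
    have "L2_norm_sq u = c\<^sup>2 * L" unfolding L2_norm_sq_def usq L_def by simp
    then show ?thesis using c2 Lpos by simp
  qed
  have intu: "integrable lborel (\<lambda>x. (u x)\<^sup>2)" unfolding usq using Lint by simp
  have s1': "0 < s1" "s1 < 1" and s2': "0 < s2" "s2 < 1" using s by auto
  have fin1: "gagliardo_sq s1 u < \<infinity>" unfolding u_def by (rule frac_tent_bound(1)[OF R s1'])
  have fin2: "gagliardo_sq s2 u < \<infinity>" unfolding u_def by (rule frac_tent_bound(1)[OF R s2'])
  have uS: "u \<in> S_sphere s1 s2 a"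
    unfolding S_sphere_def H_space_def using um intu fin1 fin2 L2u by auto
  have key: "c\<^sup>2 * (\<omega> * R ^ n) \<le> 4 * 2 ^ n * a"
  proof -
    have "(R / 2) ^ n = R ^ n / 2 ^ n" by (simp add: power_divide)
    then have "\<omega> * R ^ n \<le> 4 * 2 ^ n * L" using Llo by (simp add: field_simps)
    then have "a / L * (\<omega> * R ^ n) \<le> a / L * (4 * 2 ^ n * L)" using a Lpos by (intro mult_left_mono) auto
    also have "\<dots> = 4 * 2 ^ n * a" using Lpos by simp
    finally show ?thesis unfolding c2 .
  qed
  have fb: "frac_grad_sq s u \<le> 8 * 2 ^ n * a * R powr (- 2 * s) * J1r s TYPE('n)" if "0 < s" "s < 1" for s
  proof -
    have "frac_grad_sq s u \<le> c\<^sup>2 * (2 * (\<omega> * R ^ n) * R powr (- 2 * s) * J1r s TYPE('n))"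
      unfolding u_def \<omega>_def n_def by (rule frac_tent_bound(2)[OF R that])
    also have "\<dots> = (c\<^sup>2 * (\<omega> * R ^ n)) * (2 * R powr (- 2 * s) * J1r s TYPE('n))" by (simp add: algebra_simps)
    also have "\<dots> \<le> (4 * 2 ^ n * a) * (2 * R powr (- 2 * s) * J1r s TYPE('n))"
      by (intro mult_right_mono key) (simp add: J1r_def)
    finally show ?thesis by (simp add: algebra_simps)
  qed
  have p21: "R powr (- 2 * s2) \<le> R powr (- 2 * s1)" using R1 s by (intro powr_mono) auto
  have "frac_grad_sq s1 u + frac_grad_sq s2 u
      \<le> 8 * 2 ^ n * a * R powr (- 2 * s1) * J1r s1 TYPE('n) + 8 * 2 ^ n * a * R powr (- 2 * s2) * J1r s2 TYPE('n)"
    using fb[OF s1'] fb[OF s2'] by simp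
  also have "\<dots> \<le> 8 * 2 ^ n * a * R powr (- 2 * s1) * J1r s1 TYPE('n) + 8 * 2 ^ n * a * R powr (- 2 * s1) * J1r s2 TYPE('n)"
    using p21 a by (intro add_left_mono mult_right_mono mult_left_mono) (auto simp: J1r_def)
  also have "\<dots> = M0 * R powr (- 2 * s1)" unfolding M0_def Jm_def by (simp add: algebra_simps)
  also have "\<dots> \<le> \<epsilon>"
  proof (cases "M0 = 0")
    case True then show ?thesis using eps by simp
  next
    case False
    then have M0p: "M0 > 0" using M0 by simp
    have "(M0 / \<epsilon>) powr (1 / (2 * s1)) \<le> R" unfolding R_def by simp
    then have "((M0 / \<epsilon>) powr (1 / (2 * s1))) powr (2 * s1) \<le> R powr (2 * s1)"
      using s by (intro powr_mono2) auto
    then have "M0 / \<epsilon> \<le> R powr (2 * s1)" using s M0p eps by (simp add: powr_powr)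
    then have "M0 \<le> \<epsilon> * R powr (2 * s1)" using eps by (simp add: field_simps)
    then show ?thesis using R eps by (simp add: powr_minus field_simps)
  qed
  finally show ?thesis using uS by blast
qed


lemma intG_bound:
  fixes u :: "real^'n \<Rightarrow> real" and G :: "real \<Rightarrow> real"
  assumes [measurable]: "u \<in> borel_measurable lborel" and Gc: "continuous_on UNIV G"
    and Gnn: "\<And>t. G t \<ge> 0" and G1: "G1 \<ge> 0"
    and Gb: "\<And>t. G t \<le> G1 * (\<bar>t\<bar> powr \<alpha> + \<bar>t\<bar> powr \<beta>)"
    and Xa: "(\<integral>\<^sup>+ x. ennreal (\<bar>u x\<bar> powr \<alpha>) \<partial>lborel) \<le> ennreal Xa" and Xa0: "Xa \<ge> 0"
    and Xb: "(\<integral>\<^sup>+ x. ennreal (\<bar>u x\<bar> powr \<beta>) \<partial>lborel) \<le> ennreal Xb" and Xb0: "Xb \<ge> 0"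
  shows "0 \<le> (\<integral>x. G (u x) \<partial>lborel)" and "(\<integral>x. G (u x) \<partial>lborel) \<le> G1 * (Xa + Xb)"
proof -
  have [measurable]: "G \<in> borel_measurable borel" using Gc by (rule borel_measurable_continuous_onI)
  show "0 \<le> (\<integral>x. G (u x) \<partial>lborel)" using Gnn by (simp add: integral_nonneg)
  have "(\<integral>\<^sup>+ x. ennreal (G (u x)) \<partial>lborel)
      \<le> (\<integral>\<^sup>+ x. ennreal G1 * (ennreal (\<bar>u x\<bar> powr \<alpha>) + ennreal (\<bar>u x\<bar> powr \<beta>)) \<partial>lborel)"
  proof (rule nn_integral_mono)
    fix x
    have "ennreal (G (u x)) \<le> ennreal (G1 * (\<bar>u x\<bar> powr \<alpha> + \<bar>u x\<bar> powr \<beta>))"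
      by (rule ennreal_leI) (rule Gb)
    also have "\<dots> = ennreal G1 * (ennreal (\<bar>u x\<bar> powr \<alpha>) + ennreal (\<bar>u x\<bar> powr \<beta>))"
      using G1 by (simp add: ennreal_mult ennreal_plus)
    finally show "ennreal (G (u x)) \<le> ennreal G1 * (ennreal (\<bar>u x\<bar> powr \<alpha>) + ennreal (\<bar>u x\<bar> powr \<beta>))" .
  qed
  also have "\<dots> = ennreal G1 * ((\<integral>\<^sup>+ x. ennreal (\<bar>u x\<bar> powr \<alpha>) \<partial>lborel) + (\<integral>\<^sup>+ x. ennreal (\<bar>u x\<bar> powr \<beta>) \<partial>lborel))"
    by (simp add: nn_integral_cmult nn_integral_add)
  also have "\<dots> \<le> ennreal G1 * (ennreal Xa + ennreal Xb)"
    by (intro mult_left_mono add_mono Xa Xb) auto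
  also have "\<dots> = ennreal (G1 * (Xa + Xb))" using G1 Xa0 Xb0 by (simp add: ennreal_mult ennreal_plus)
  finally have le: "(\<integral>\<^sup>+ x. ennreal (G (u x)) \<partial>lborel) \<le> ennreal (G1 * (Xa + Xb))" .
  have "(\<integral>x. G (u x) \<partial>lborel) = enn2real (\<integral>\<^sup>+ x. ennreal (G (u x)) \<partial>lborel)"
    by (rule integral_eq_nn_integral) (auto simp: Gnn)
  also have "\<dots> \<le> enn2real (ennreal (G1 * (Xa + Xb)))" by (intro enn2real_mono le) simp
  also have "\<dots> = G1 * (Xa + Xb)" using G1 Xa0 Xb0 by simp
  finally show "(\<integral>x. G (u x) \<partial>lborel) \<le> G1 * (Xa + Xb)" .
qed

lemma lin_aux: "P \<le> F / 8 \<Longrightarrow> (F + F2) / 2 - P \<le> E \<Longrightarrow> 0 < F \<Longrightarrow> 0 \<le> F2 \<Longrightarrow> 0 < (E::real)"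
  by (simp add: field_simps)
lemma lin_up: "E \<le> (F + F2) / 2 \<Longrightarrow> F + F2 \<le> K \<Longrightarrow> E \<le> (K::real) / 2"
  by (simp add: field_simps)
lemma lin_B: "P \<le> F / 8 \<Longrightarrow> (F + F2) / 2 - P \<le> E \<Longrightarrow> F + F2 = 2 * K \<Longrightarrow> 0 \<le> F2 \<Longrightarrow> 3 * K / 4 \<le> (E::real)"
  by (simp add: field_simps)

theorem lemma3p10:
  fixes s1 s2 a :: real and g :: "real \<Rightarrow> real"
  assumes s: "0 < s1" "s1 < s2" "s2 < 1"
    and d: "2 * s1 < real CARD('n)" "real CARD('n) < 2 * s1 * s2 / (s2 - s1)"
    and a: "a > 0"
    and G1: "continuous_on UNIV g" "\<And>t. g (- t) = - g t"
    and G2: "\<exists>\<alpha> \<beta>. 2 + 4 * s2 / real CARD('n) < \<alpha> \<and> \<alpha> < \<beta>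
               \<and> \<beta> < 2 * real CARD('n) / (real CARD('n) - 2 * s1)
               \<and> (\<forall>t. \<alpha> * primitive g t \<le> g t * t \<and> g t * t \<le> \<beta> * primitive g t)"
  shows "\<exists>K>0.
    let A = {u :: real^'n \<Rightarrow> real. u \<in> S_sphere s1 s2 a \<and> frac_grad_sq s1 u + frac_grad_sq s2 u \<le> K};
        B = {u :: real^'n \<Rightarrow> real. u \<in> S_sphere s1 s2 a \<and> frac_grad_sq s1 u + frac_grad_sq s2 u = 2 * K}
    in 0 < (SUP u\<in>A. ereal (energy s1 s2 g u))
       \<and> (SUP u\<in>A. ereal (energy s1 s2 g u)) < (INF u\<in>B. ereal (energy s1 s2 g u))"
proof -
  obtain \<alpha> \<beta> where ab: "2 + 4 * s2 / real CARD('n) < \<alpha>" "\<alpha> < \<beta>"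
      "\<beta> < 2 * real CARD('n) / (real CARD('n) - 2 * s1)"
      and H: "\<And>t. \<alpha> * primitive g t \<le> g t * t \<and> g t * t \<le> \<beta> * primitive g t"
    using G2 by blast
  define dd where "dd = real CARD('n)"
  have dd: "dd > 0" unfolding dd_def by simp
  have dd2: "dd - 2 * s1 > 0" using d(1) unfolding dd_def by simp
  have a2: "\<alpha> > 2" using ab(1) s dd unfolding dd_def by (smt (verit) divide_pos_pos)
  have b2: "\<beta> > 2" using a2 ab by simp
  have pq_of: "p < 2 + 2 * s1 / real CARD('n) * p" if "p < 2 * real CARD('n) / (real CARD('n) - 2 * s1)" for p
  proof -
    have "p * (dd - 2 * s1) < 2 * dd" using that dd2 unfolding dd_def by (simp add: field_simps)
    then have "p < 2 + 2 * s1 / dd * p" using dd by (simp add: field_simps)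
    then show ?thesis unfolding dd_def .
  qed
  have apq: "\<alpha> < 2 + 2 * s1 / real CARD('n) * \<alpha>" using ab by (intro pq_of) simp
  have bpq: "\<beta> < 2 + 2 * s1 / real CARD('n) * \<beta>" using ab by (intro pq_of) simp
  define G where "G = primitive g"
  have Gnn: "\<And>t. G t \<ge> 0" and Gb: "\<And>t. G t \<le> G 1 * (\<bar>t\<bar> powr \<alpha> + \<bar>t\<bar> powr \<beta>)"
    and Gc: "continuous_on UNIV G"
    using G_facts[OF G1(1) G1(2) ab(2) _ H] a2 unfolding G_def by auto
  define C\<alpha> where "C\<alpha> = csob a \<alpha> s1 dd"
  define C\<beta> where "C\<beta> = csob a \<beta> s1 dd"
  define \<gamma>\<alpha> where "\<gamma>\<alpha> = (\<alpha> - 2) / (2 * (2 * s1 / dd))"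
  define \<gamma>\<beta> where "\<gamma>\<beta> = (\<beta> - 2) / (2 * (2 * s1 / dd))"
  have Ca: "C\<alpha> \<ge> 0" and Cb: "C\<beta> \<ge> 0" unfolding C\<alpha>_def C\<beta>_def csob_def by simp_all
  have ga1: "\<gamma>\<alpha> > 1"
  proof -
    have "4 * s2 / dd > 4 * s1 / dd" using s dd by (simp add: divide_strict_right_mono)
    then have "\<alpha> - 2 > 4 * s1 / dd" using ab(1) unfolding dd_def by simp
    then have "(\<alpha> - 2) * dd > 4 * s1" using dd by (simp add: field_simps)
    then show ?thesis unfolding \<gamma>\<alpha>_def using s dd by (simp add: field_simps)
  qed
  have gab: "\<gamma>\<beta> \<ge> \<gamma>\<alpha>" unfolding \<gamma>\<alpha>_def \<gamma>\<beta>_def using ab(2) s dd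
    by (intro divide_right_mono) auto
  define \<Phi> where "\<Phi> x = G 1 * (C\<alpha> * x powr \<gamma>\<alpha> + C\<beta> * x powr \<gamma>\<beta>)" for x
  have G1nn: "G 1 \<ge> 0" by (rule Gnn)
  have ebound: "energy s1 s2 g u \<le> (frac_grad_sq s1 u + frac_grad_sq s2 u) / 2
      \<and> (frac_grad_sq s1 u + frac_grad_sq s2 u) / 2 - \<Phi> (frac_grad_sq s1 u) \<le> energy s1 s2 g u
      \<and> 0 < frac_grad_sq s1 u \<and> 0 \<le> frac_grad_sq s2 u"
    if uS: "u \<in> S_sphere s1 s2 a" for u :: "real^'n \<Rightarrow> real"
  proof -
    from uS have um[measurable]: "u \<in> borel_measurable lborel" and intu: "integrable lborel (\<lambda>x. (u x)\<^sup>2)"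
      and fin1: "gagliardo_sq s1 u < \<infinity>" and fin2: "gagliardo_sq s2 u < \<infinity>" and L2: "L2_norm_sq u = a"
      unfolding S_sphere_def H_space_def by auto
    define F1 where "F1 = frac_grad_sq s1 u"
    define F2 where "F2 = frac_grad_sq s2 u"
    have F1: "F1 \<ge> 0" and F2: "F2 \<ge> 0" unfolding F1_def F2_def frac_grad_sq_def by simp_all
    have g1: "gagliardo_sq s1 u = ennreal F1" unfolding F1_def frac_grad_sq_def using fin1
      by (simp add: ennreal_enn2real less_top)
    have L2n: "(\<integral>\<^sup>+ x. ennreal ((u x)\<^sup>2) \<partial>lborel) \<le> ennreal a"
    proof -
      have "(\<integral>\<^sup>+ x. ennreal ((u x)\<^sup>2) \<partial>lborel) = ennreal (\<integral>x. (u x)\<^sup>2 \<partial>lborel)"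
        by (rule nn_integral_eq_integral[OF intu]) simp
      then show ?thesis using L2 unfolding L2_norm_sq_def by simp
    qed
    have Ia: "(\<integral>\<^sup>+ x. ennreal (\<bar>u x\<bar> powr \<alpha>) \<partial>lborel) \<le> ennreal (C\<alpha> * F1 powr \<gamma>\<alpha>)"
      unfolding C\<alpha>_def \<gamma>\<alpha>_def dd_def
      by (rule sob_general[OF um s(1) a2 apq _ L2n F1 g1]) (use a in simp)
    have Ib: "(\<integral>\<^sup>+ x. ennreal (\<bar>u x\<bar> powr \<beta>) \<partial>lborel) \<le> ennreal (C\<beta> * F1 powr \<gamma>\<beta>)"
      unfolding C\<beta>_def \<gamma>\<beta>_def dd_def
      by (rule sob_general[OF um s(1) b2 bpq _ L2n F1 g1]) (use a in simp)
    have IG: "0 \<le> (\<integral>x. G (u x) \<partial>lborel)" "(\<integral>x. G (u x) \<partial>lborel) \<le> G 1 * (C\<alpha> * F1 powr \<gamma>\<alpha> + C\<beta> * F1 powr \<gamma>\<beta>)"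
      using intG_bound[OF um Gc Gnn G1nn Gb Ia _ Ib] Ca Cb by auto
    have en: "energy s1 s2 g u = F1 / 2 + F2 / 2 - (\<integral>x. G (u x) \<partial>lborel)"
      unfolding energy_def F1_def F2_def G_def ..
    have F1pos: "F1 > 0"
    proof (rule ccontr)
      assume "\<not> F1 > 0"
      then have "F1 = 0" using F1 by simp
      then have "(\<integral>\<^sup>+ x. ennreal (\<bar>u x\<bar> powr \<alpha>) \<partial>lborel) = 0"
        using Ia ga1 by simp
      then have "AE x in lborel. ennreal (\<bar>u x\<bar> powr \<alpha>) = 0"
        by (subst (asm) nn_integral_0_iff_AE) auto
      then have ae: "AE x in lborel. (u x)\<^sup>2 = 0" by eventually_elim simp
      have "(\<integral>x. (u x)\<^sup>2 \<partial>lborel) = 0"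
        by (rule integral_eq_zero_AE[OF ae])
      then have "a = 0" using L2 unfolding L2_norm_sq_def by simp
      then show False using a by simp
    qed
    show ?thesis using en IG F1pos F2 unfolding \<Phi>_def F1_def[symmetric] F2_def[symmetric]
      by (auto simp: add_divide_distrib)
  qed
  define e where "e = \<gamma>\<alpha> - 1"
  have e: "e > 0" unfolding e_def using ga1 by simp
  define E where "E = G 1 * (C\<alpha> + C\<beta>) + 1"
  have "G 1 * (C\<alpha> + C\<beta>) \<ge> 0" using G1nn Ca Cb by simp
  then have E: "E > 0" unfolding E_def by simp
  define K where "K = min 1 ((1 / (8 * E)) powr (1 / e)) / 2"
  have K: "K > 0" unfolding K_def using E by simp
  have K1: "2 * K \<le> 1" unfolding K_def by simp
  have KE: "E * (2 * K) powr e \<le> 1 / 8"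
  proof -
    have "(2 * K) powr e \<le> ((1 / (8 * E)) powr (1 / e)) powr e"
      unfolding K_def using e E by (intro powr_mono2) auto
    also have "\<dots> = 1 / (8 * E)" using e E by (simp add: powr_powr)
    finally show ?thesis using E by (simp add: field_simps)
  qed
  have Phi_small: "\<Phi> x \<le> x / 8" if x: "0 \<le> x" "x \<le> 2 * K" for x
  proof (cases "x = 0")
    case True then show ?thesis unfolding \<Phi>_def using ga1 gab by simp
  next
    case False
    then have xp: "x > 0" using x by simp
    have x1: "x \<le> 1" using x K1 by simp
    have pa: "x powr \<gamma>\<alpha> = x * x powr e" unfolding e_def using xp by (simp add: powr_diff)
    have pb: "x powr \<gamma>\<beta> \<le> x * x powr e"
    proof -
      have "x powr \<gamma>\<beta> = x * x powr (\<gamma>\<beta> - 1)" using xp by (simp add: powr_diff)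
      also have "x powr (\<gamma>\<beta> - 1) \<le> x powr e" unfolding e_def using gab xp x1 by (intro powr_mono') auto
      finally show ?thesis using xp by simp
    qed
    have "\<Phi> x \<le> G 1 * (C\<alpha> * (x * x powr e) + C\<beta> * (x * x powr e))"
      unfolding \<Phi>_def pa using pb G1nn Cb by (intro mult_left_mono add_left_mono) auto
    also have "\<dots> = x * (G 1 * (C\<alpha> + C\<beta>) * x powr e)" by (simp add: algebra_simps)
    also have "\<dots> \<le> x * (E * (2 * K) powr e)"
      using xp G1nn Ca Cb e x unfolding E_def
      by (intro mult_left_mono mult_mono powr_mono2) auto
    also have "\<dots> \<le> x * (1 / 8)" using KE xp by (intro mult_left_mono) auto
    finally show ?thesis by simp
  qed
  define A where "A = {u :: real^'n \<Rightarrow> real. u \<in> S_sphere s1 s2 a \<and> frac_grad_sq s1 u + frac_grad_sq s2 u \<le> K}"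
  define B where "B = {u :: real^'n \<Rightarrow> real. u \<in> S_sphere s1 s2 a \<and> frac_grad_sq s1 u + frac_grad_sq s2 u = 2 * K}"
  obtain u0 :: "real^'n \<Rightarrow> real" where u0: "u0 \<in> S_sphere s1 s2 a" "frac_grad_sq s1 u0 + frac_grad_sq s2 u0 \<le> K"
    using exists_small[OF s a K] by blast
  have u0A: "u0 \<in> A" unfolding A_def using u0 by simp
  have pos0: "energy s1 s2 g u0 > 0"
  proof -
    note eb = ebound[OF u0(1)]
    have "\<Phi> (frac_grad_sq s1 u0) \<le> frac_grad_sq s1 u0 / 8"
      using eb u0(2) K by (intro Phi_small) auto
    then show ?thesis using eb by (elim conjE) (rule lin_aux)
  qed
  have supA: "(SUP u\<in>A. ereal (energy s1 s2 g u)) \<le> ereal (K / 2)"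
  proof (rule SUP_least)
    fix u assume "u \<in> A"
    then have "u \<in> S_sphere s1 s2 a" "frac_grad_sq s1 u + frac_grad_sq s2 u \<le> K" unfolding A_def by auto
    then have "energy s1 s2 g u \<le> K / 2" using ebound[of u] by (auto intro: lin_up)
    then show "ereal (energy s1 s2 g u) \<le> ereal (K / 2)" by simp
  qed
  have infB: "ereal (3 * K / 4) \<le> (INF u\<in>B. ereal (energy s1 s2 g u))"
  proof (rule INF_greatest)
    fix u assume "u \<in> B"
    then have uS: "u \<in> S_sphere s1 s2 a" and T: "frac_grad_sq s1 u + frac_grad_sq s2 u = 2 * K"
      unfolding B_def by auto
    note eb = ebound[OF uS]
    have "\<Phi> (frac_grad_sq s1 u) \<le> frac_grad_sq s1 u / 8"
      using eb T by (intro Phi_small) auto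
    then have "3 * K / 4 \<le> energy s1 s2 g u" using eb T by (elim conjE) (rule lin_B)
    then show "ereal (3 * K / 4) \<le> ereal (energy s1 s2 g u)" by simp
  qed
  have "0 < (SUP u\<in>A. ereal (energy s1 s2 g u))"
  proof -
    have "ereal (energy s1 s2 g u0) \<le> (SUP u\<in>A. ereal (energy s1 s2 g u))"
      using u0A by (rule SUP_upper)
    moreover have "(0::ereal) < ereal (energy s1 s2 g u0)" using pos0 by simp
    ultimately show ?thesis by (rule order.strict_trans2[rotated])
  qed
  moreover have "(SUP u\<in>A. ereal (energy s1 s2 g u)) < (INF u\<in>B. ereal (energy s1 s2 g u))"
  proof -
    have "ereal (K / 2) < ereal (3 * K / 4)" using K by simp
    then show ?thesis using supA infB by (meson order.strict_trans1 order.strict_trans2)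
  qed
  ultimately show ?thesis using K unfolding A_def B_def Let_def by blast
qed

end
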